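(* Let $\varphi:\mathbb{R}\to\mathbb{R}$ be smooth with at most quadratic growth. Then the Omori–Yau maximum principle for $\Delta^{\varphi}$ holds on every properly immersed $[\varphi,\vec e_3]$-minimal surface $\Sigma$ in $\mathbb{R}^3$; in particular $\Sigma$ is $\varphi$-stochastically complete.
   Context: Surfaces are connected, orientable, immersed in $\mathbb{R}^3$, without boundary, with unit normal $N$; $\mu(p)=\langle p,\vec e_3\rangle$, $\eta=\langle N,\vec e_3\rangle$. $\Sigma$ is $[\varphi,\vec e_3]$-minimal if its mean curvature vector $\vec H$ (trace of the second fundamental form) satisfies $\vec H=\dot\varphi(\mu)\eta N$. "At most quadratic growth" means there is $C>0$ with $|\dot\varphi(t)|\le C(1+|t|)$ for all $t$. $\Delta^{\varphi}u=\Delta u+\langle\nabla(\varphi\circ\mu),\nabla u\rangle$ on $\Sigma$ (induced metric). The Omori–Yau maximum principle for $\Delta^\varphi$ holds on $\Sigma$ if for every $u\in C^2(\Sigma)$ with $u^*=\sup_\Sigma u<+\infty$ there is a sequence $p_n$ with $u(p_n)>u^*-1/n$, $|\nabla u(p_n)|<1/n$ and $\Delta^\varphi u(p_n)<1/n$ for all $n$; $\varphi$-stochastic completeness is the same statement without the gradient condition. *)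

theory Defs
  imports "HOL-Analysis.Analysis"
begin

definition ee :: "nat \<Rightarrow> real \<times> real" where
  "ee i = (if i = 1 then (1, 0) else (0, 1))"

definition pd :: "nat \<Rightarrow> (real \<times> real \<Rightarrow> 'b::real_normed_vector) \<Rightarrow> real \<times> real \<Rightarrow> 'b" where
  "pd i f x = frechet_derivative f (at x) (ee i)"

primrec Ck :: "nat \<Rightarrow> (real \<times> real) set \<Rightarrow> (real \<times> real \<Rightarrow> 'b::real_normed_vector) \<Rightarrow> bool" where
  "Ck 0 S f = continuous_on S f"
| "Ck (Suc k) S f = (continuous_on S f \<and> f differentiable_on S \<and> Ck k S (pd 1 f) \<and> Ck k S (pd 2 f))"

definition smooth2 :: "(real \<times> real) set \<Rightarrow> (real \<times> real \<Rightarrow> 'b::real_normed_vector) \<Rightarrow> bool" where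
  "smooth2 S f = (\<forall>k. Ck k S f)"

definition smooth_real :: "(real \<Rightarrow> real) \<Rightarrow> bool" where
  "smooth_real f = (\<forall>k x. ((deriv ^^ k) f) differentiable (at x))"

definition e3comp :: "real \<times> real \<times> real \<Rightarrow> real" where
  "e3comp p = p \<bullet> (0, 0, 1)"

(* Local geometry of a parametrisation X : U \<subseteq> R^2 \<rightarrow> R^3 (X = F \<circ> chart) *)
definition gmet :: "(real \<times> real \<Rightarrow> real \<times> real \<times> real) \<Rightarrow> nat \<Rightarrow> nat \<Rightarrow> real \<times> real \<Rightarrow> real" where
  "gmet X i j x = pd i X x \<bullet> pd j X x"

definition gdet :: "(real \<times> real \<Rightarrow> real \<times> real \<times> real) \<Rightarrow> real \<times> real \<Rightarrow> real" where
  "gdet X x = gmet X 1 1 x * gmet X 2 2 x - gmet X 1 2 x * gmet X 2 1 x"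

definition ginv :: "(real \<times> real \<Rightarrow> real \<times> real \<times> real) \<Rightarrow> nat \<Rightarrow> nat \<Rightarrow> real \<times> real \<Rightarrow> real" where
  "ginv X i j x = (if i = j then gmet X (3 - i) (3 - j) x else - gmet X i j x) / gdet X x"

definition grad_inner :: "(real \<times> real \<Rightarrow> real \<times> real \<times> real) \<Rightarrow> (real \<times> real \<Rightarrow> real) \<Rightarrow> (real \<times> real \<Rightarrow> real) \<Rightarrow> real \<times> real \<Rightarrow> real" where
  "grad_inner X f u x = (\<Sum>i\<in>{1,2}. \<Sum>j\<in>{1,2}. ginv X i j x * pd i f x * pd j u x)"

definition lap :: "(real \<times> real \<Rightarrow> real \<times> real \<times> real) \<Rightarrow> (real \<times> real \<Rightarrow> real) \<Rightarrow> real \<times> real \<Rightarrow> real" where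
  "lap X u x = (\<Sum>i\<in>{1,2}. pd i (\<lambda>y. sqrt (gdet X y) * (\<Sum>j\<in>{1,2}. ginv X i j y * pd j u y)) x)
                / sqrt (gdet X x)"

definition phi_lap :: "(real \<Rightarrow> real) \<Rightarrow> (real \<times> real \<Rightarrow> real \<times> real \<times> real) \<Rightarrow> (real \<times> real \<Rightarrow> real) \<Rightarrow> real \<times> real \<Rightarrow> real" where
  "phi_lap \<phi> X u x = lap X u x + grad_inner X (\<lambda>y. \<phi> (e3comp (X y))) u x"

(* mean curvature vector = trace of the second fundamental form II(X_i,X_j) = <X_ij, N> N *)
definition mean_curv_vec :: "(real \<times> real \<Rightarrow> real \<times> real \<times> real) \<Rightarrow> (real \<times> real \<Rightarrow> real \<times> real \<times> real) \<Rightarrow> real \<times> real \<Rightarrow> real \<times> real \<times> real" where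
  "mean_curv_vec X Nl x = (\<Sum>i\<in>{1,2}. \<Sum>j\<in>{1,2}. ginv X i j x * (pd j (pd i X) x \<bullet> Nl x)) *\<^sub>R Nl x"

(* A connected oriented smooth surface without boundary (Hausdorff, second countable, given by a
   smooth atlas A of charts c : U \<rightarrow> \<Sigma>, U \<subseteq> R^2 open), immersed in R^3 by F, with unit normal N. *)
definition immersed_surface ::
  "((real \<times> real) set \<times> (real \<times> real \<Rightarrow> 'm::{t2_space, second_countable_topology})) set
   \<Rightarrow> ('m \<Rightarrow> real \<times> real \<times> real) \<Rightarrow> ('m \<Rightarrow> real \<times> real \<times> real) \<Rightarrow> bool" where
  "immersed_surface A F N \<longleftrightarrow>
     connected (UNIV :: 'm set)
   \<and> (\<Union>(U, c)\<in>A. c ` U) = UNIV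
   \<and> (\<forall>(U, c)\<in>A. open U \<and> open (c ` U) \<and> (\<exists>c'. homeomorphism U (c ` U) c c'))
   \<and> (\<forall>(U, c)\<in>A. \<forall>(V, d)\<in>A.
        smooth2 (U \<inter> c -` (d ` V)) (inv_into V d \<circ> c))
   \<and> (\<forall>(U, c)\<in>A. smooth2 U (F \<circ> c) \<and> smooth2 U (N \<circ> c)
        \<and> (\<forall>x\<in>U. (\<forall>a b. a *\<^sub>R pd 1 (F \<circ> c) x + b *\<^sub>R pd 2 (F \<circ> c) x = 0 \<longrightarrow> a = 0 \<and> b = 0)
                 \<and> norm (N (c x)) = 1
                 \<and> N (c x) \<bullet> pd 1 (F \<circ> c) x = 0 \<and> N (c x) \<bullet> pd 2 (F \<circ> c) x = 0))"

definition proper_immersion :: "('m::topological_space \<Rightarrow> real \<times> real \<times> real) \<Rightarrow> bool" where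
  "proper_immersion F \<longleftrightarrow> (\<forall>K. compact K \<longrightarrow> compact (F -` K))"

definition phi_minimal ::
  "((real \<times> real) set \<times> (real \<times> real \<Rightarrow> 'm)) set \<Rightarrow> ('m \<Rightarrow> real \<times> real \<times> real)
   \<Rightarrow> ('m \<Rightarrow> real \<times> real \<times> real) \<Rightarrow> (real \<Rightarrow> real) \<Rightarrow> bool" where
  "phi_minimal A F N \<phi> \<longleftrightarrow>
     (\<forall>(U, c)\<in>A. \<forall>x\<in>U. mean_curv_vec (F \<circ> c) (N \<circ> c) x
         = (deriv \<phi> (e3comp (F (c x))) * e3comp (N (c x))) *\<^sub>R N (c x))"

definition C2_on_surface :: "((real \<times> real) set \<times> (real \<times> real \<Rightarrow> 'm)) set \<Rightarrow> ('m \<Rightarrow> real) \<Rightarrow> bool" where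
  "C2_on_surface A u \<longleftrightarrow> (\<forall>(U, c)\<in>A. Ck 2 U (u \<circ> c))"

(* Omori-Yau maximum principle for \<Delta>^\<phi>; gradient and \<Delta>^\<phi> at p are computed in a chart around p
   (they do not depend on the chart). *)
definition omori_yau ::
  "((real \<times> real) set \<times> (real \<times> real \<Rightarrow> 'm)) set \<Rightarrow> ('m \<Rightarrow> real \<times> real \<times> real) \<Rightarrow> (real \<Rightarrow> real) \<Rightarrow> bool" where
  "omori_yau A F \<phi> \<longleftrightarrow>
    (\<forall>u. C2_on_surface A u \<longrightarrow> bdd_above (range u) \<longrightarrow>
      (\<exists>p :: nat \<Rightarrow> 'm. \<forall>n::nat. n \<ge> 1 \<longrightarrow>
          u (p n) > Sup (range u) - 1 / real n
        \<and> (\<exists>(U, c)\<in>A. \<exists>x\<in>U. c x = p n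
             \<and> sqrt (grad_inner (F \<circ> c) (u \<circ> c) (u \<circ> c) x) < 1 / real n
             \<and> phi_lap \<phi> (F \<circ> c) (u \<circ> c) x < 1 / real n)))"

definition phi_stoch_complete ::
  "((real \<times> real) set \<times> (real \<times> real \<Rightarrow> 'm)) set \<Rightarrow> ('m \<Rightarrow> real \<times> real \<times> real) \<Rightarrow> (real \<Rightarrow> real) \<Rightarrow> bool" where
  "phi_stoch_complete A F \<phi> \<longleftrightarrow>
    (\<forall>u. C2_on_surface A u \<longrightarrow> bdd_above (range u) \<longrightarrow>
      (\<exists>p :: nat \<Rightarrow> 'm. \<forall>n::nat. n \<ge> 1 \<longrightarrow>
          u (p n) > Sup (range u) - 1 / real n
        \<and> (\<exists>(U, c)\<in>A. \<exists>x\<in>U. c x = p n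
             \<and> phi_lap \<phi> (F \<circ> c) (u \<circ> c) x < 1 / real n)))"

end

theory Submission
  imports Defs
begin


lemma pd_hasD: "(f has_derivative f') (at x) \<Longrightarrow> pd i f x = f' (ee i)"
  unfolding pd_def by (simp add: frechet_derivative_at[symmetric])

lemma fd_works: "f differentiable (at x) \<Longrightarrow> (f has_derivative frechet_derivative f (at x)) (at x)"
  by (simp add: frechet_derivative_works)

lemma pd_local:
  assumes "open S" "x \<in> S" "\<And>y. y \<in> S \<Longrightarrow> f y = g y"
  shows "pd i f x = pd i g x"
proof -
  have "\<And>f'. (f has_derivative f') (at x) \<longleftrightarrow> (g has_derivative f') (at x)"
    using has_derivative_transform_within_open[OF _ assms(1,2)] assms(3) by metis
  then show ?thesis unfolding pd_def frechet_derivative_def by simp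
qed

lemma diff_local:
  assumes "open S" "x \<in> S" "\<And>y. y \<in> S \<Longrightarrow> f y = g y" "f differentiable (at x)"
  shows "g differentiable (at x)"
  using has_derivative_transform_within_open[OF _ assms(1,2)] assms(3,4)
  unfolding differentiable_def by metis

lemma pd_add: "f differentiable (at x) \<Longrightarrow> g differentiable (at x) \<Longrightarrow>
   pd i (\<lambda>y. f y + g y) x = pd i f x + pd i g x"
  using pd_hasD[OF has_derivative_add[OF fd_works fd_works]] by (simp add: pd_def)

lemma pd_diff: "f differentiable (at x) \<Longrightarrow> g differentiable (at x) \<Longrightarrow>
   pd i (\<lambda>y. f y - g y) x = pd i f x - pd i g x"
  using pd_hasD[OF has_derivative_diff[OF fd_works fd_works]] by (simp add: pd_def)

lemma pd_mult: "f differentiable (at x) \<Longrightarrow> g differentiable (at x) \<Longrightarrow>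
   pd i (\<lambda>y. f y * g y :: real) x = f x * pd i g x + pd i f x * g x"
  using pd_hasD[OF has_derivative_mult[OF fd_works fd_works]] by (simp add: pd_def)

lemma pd_inner: "f differentiable (at x) \<Longrightarrow> g differentiable (at x) \<Longrightarrow>
   pd i (\<lambda>y. inner (f y) (g y)) x = inner (f x) (pd i g x) + inner (pd i f x) (g x)"
  using pd_hasD[OF has_derivative_inner[OF fd_works fd_works]] by (simp add: pd_def)

lemma pd_cmult: "f differentiable (at x) \<Longrightarrow> pd i (\<lambda>y. c * f y :: real) x = c * pd i f x"
  using pd_hasD[OF has_derivative_mult_right[OF fd_works]] by (simp add: pd_def)

lemma pd_const: "pd i (\<lambda>y. c) x = 0"
  by (rule pd_hasD[where f'="\<lambda>_. 0", simplified]) simp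

lemma pd_linear: "bounded_linear l \<Longrightarrow> f differentiable (at x) \<Longrightarrow> pd i (\<lambda>y. l (f y)) x = l (pd i f x)"
  using pd_hasD[OF bounded_linear.has_derivative[OF _ fd_works]] by (simp add: pd_def)

lemma pd_comp: "f differentiable (at x) \<Longrightarrow> (h::real\<Rightarrow>real) differentiable (at (f x)) \<Longrightarrow>
   pd i (\<lambda>y. h (f y)) x = deriv h (f x) * pd i f x"
proof -
  assume f: "f differentiable (at x)" and h: "h differentiable (at (f x))"
  have "(h has_real_derivative deriv h (f x)) (at (f x))"
    using h by (simp add: DERIV_deriv_iff_real_differentiable)
  then have "(h has_derivative (\<lambda>t. t * deriv h (f x))) (at (f x))"
    by (simp add: has_field_derivative_def mult.commute[of _ "deriv h (f x)"])
  note D = has_derivative_compose[OF fd_works[OF f] this]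
  show ?thesis unfolding pd_hasD[OF D] by (simp add: pd_def mult.commute)
qed

lemma pd_sqrt: "f differentiable (at x) \<Longrightarrow> f x > 0 \<Longrightarrow>
   pd i (\<lambda>y. sqrt (f y)) x = pd i f x / (2 * sqrt (f x))"
proof -
  assume f: "f differentiable (at x)" and p: "f x > 0"
  have "sqrt differentiable (at (f x))"
    using DERIV_real_sqrt[OF p] real_differentiable_def by (metis differentiable_def has_field_derivative_def)
  moreover have "deriv sqrt (f x) = inverse (sqrt (f x)) / 2"
    using DERIV_real_sqrt[OF p] DERIV_imp_deriv by blast
  ultimately show ?thesis using pd_comp[OF f, of sqrt] by (simp add: field_simps)
qed

lemma pd_divide: "f differentiable (at x) \<Longrightarrow> g differentiable (at x) \<Longrightarrow> g x \<noteq> 0 \<Longrightarrow>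
   pd i (\<lambda>y. f y / g y :: real) x = pd i f x / g x - f x * pd i g x / (g x)^2"
proof -
  assume f: "f differentiable (at x)" and g: "g differentiable (at x)" and nz: "g x \<noteq> 0"
  note D = has_derivative_divide[OF fd_works[OF f] fd_works[OF g] nz]
  show ?thesis unfolding pd_hasD[OF D] by (simp add: pd_def field_simps power2_eq_square)
qed


lemma pd_minus: "f differentiable (at x) \<Longrightarrow> pd i (\<lambda>y. - f y) x = - pd i f x"
  using pd_hasD[OF has_derivative_minus[OF fd_works]] by (simp add: pd_def)

lemma diff_inner: "f differentiable (at x) \<Longrightarrow> g differentiable (at x) \<Longrightarrow>
   (\<lambda>y. inner (f y) (g y)) differentiable (at x)"
  using has_derivative_inner[OF fd_works fd_works] by (rule differentiableI)

lemma diff_sqrt: "f differentiable (at x) \<Longrightarrow> f x > 0 \<Longrightarrow> (\<lambda>y. sqrt (f y)) differentiable (at x)"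
proof -
  assume f: "f differentiable (at x)" and p: "f x > 0"
  have "sqrt differentiable (at (f x))"
    using DERIV_real_sqrt[OF p] real_differentiable_def by (metis differentiable_def has_field_derivative_def)
  then show ?thesis using differentiable_compose[OF _ f] by blast
qed

lemma diff_comp: "f differentiable (at x) \<Longrightarrow> (h::real\<Rightarrow>real) differentiable (at (f x)) \<Longrightarrow>
   (\<lambda>y. h (f y)) differentiable (at x)"
  using differentiable_compose by blast

lemma pd_lapterm:
  fixes s g1 g2 w1 w2 :: "real \<times> real \<Rightarrow> real"
  assumes "s differentiable (at x)" "g1 differentiable (at x)" "g2 differentiable (at x)"
    "w1 differentiable (at x)" "w2 differentiable (at x)"
  shows "pd i (\<lambda>y. s y * (g1 y * w1 y + g2 y * w2 y)) x =
     s x * ((g1 x * pd i w1 x + pd i g1 x * w1 x) + (g2 x * pd i w2 x + pd i g2 x * w2 x))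
     + pd i s x * (g1 x * w1 x + g2 x * w2 x)"
proof -
  have a: "(\<lambda>y. g1 y * w1 y) differentiable (at x)" "(\<lambda>y. g2 y * w2 y) differentiable (at x)"
    using assms by auto
  have b: "(\<lambda>y. g1 y * w1 y + g2 y * w2 y) differentiable (at x)" using a by auto
  show ?thesis
    using pd_mult[OF assms(1) b, of i] pd_add[OF a, of i] pd_mult[OF assms(2,4), of i] pd_mult[OF assms(3,5), of i]
    by simp
qed


lemma dir1_deriv:
  fixes f :: "real \<times> real \<Rightarrow> real"
  assumes "f differentiable (at (a + s, c))"
  shows "((\<lambda>s. f (a + s, c)) has_real_derivative pd 1 f (a + s, c)) (at s)"
proof -
  let ?F = "frechet_derivative f (at (a + s, c))"
  have l: "((\<lambda>s. (a + s, c)) has_derivative (\<lambda>s. (s, 0))) (at s)"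
    by (auto intro!: derivative_eq_intros)
  note D = has_derivative_compose[OF l fd_works[OF assms]]
  have lin: "linear ?F" using fd_works[OF assms] has_derivative_linear by blast
  have eq: "(\<lambda>t. ?F (t, 0)) = (\<lambda>t. pd 1 f (a + s, c) * t)"
  proof
    fix t
    show "?F (t, 0) = pd 1 f (a + s, c) * t"
      using linear_scale[OF lin, of t "(1,0)"] by (simp add: pd_def ee_def)
  qed
  have "((\<lambda>s. f (a + s, c)) has_derivative (\<lambda>t. pd 1 f (a + s, c) * t)) (at s)"
    using D unfolding eq .
  then show ?thesis by (simp add: has_field_derivative_def)
qed

lemma dir2_deriv:
  fixes f :: "real \<times> real \<Rightarrow> real"
  assumes "f differentiable (at (c, a + s))"
  shows "((\<lambda>s. f (c, a + s)) has_real_derivative pd 2 f (c, a + s)) (at s)"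
proof -
  let ?F = "frechet_derivative f (at (c, a + s))"
  have l: "((\<lambda>s. (c, a + s)) has_derivative (\<lambda>s. (0, s))) (at s)"
    by (auto intro!: derivative_eq_intros)
  note D = has_derivative_compose[OF l fd_works[OF assms]]
  have lin: "linear ?F" using fd_works[OF assms] has_derivative_linear by blast
  have eq: "(\<lambda>t. ?F (0, t)) = (\<lambda>t. pd 2 f (c, a + s) * t)"
  proof
    fix t
    show "?F (0, t) = pd 2 f (c, a + s) * t"
      using linear_scale[OF lin, of t "(0,1)"] by (simp add: pd_def ee_def)
  qed
  have "((\<lambda>s. f (c, a + s)) has_derivative (\<lambda>t. pd 2 f (c, a + s) * t)) (at s)"
    using D unfolding eq .
  then show ?thesis by (simp add: has_field_derivative_def)
qed

lemma clairaut:
  fixes f :: "real \<times> real \<Rightarrow> real"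
  assumes U: "open U" "x \<in> U"
    and d0: "\<And>y. y \<in> U \<Longrightarrow> f differentiable (at y)"
    and d1: "\<And>y. y \<in> U \<Longrightarrow> pd 1 f differentiable (at y)"
    and d2: "\<And>y. y \<in> U \<Longrightarrow> pd 2 f differentiable (at y)"
    and c12: "continuous_on U (pd 2 (pd 1 f))" and c21: "continuous_on U (pd 1 (pd 2 f))"
  shows "pd 2 (pd 1 f) x = pd 1 (pd 2 f) x"
proof (rule ccontr)
  assume ne: "pd 2 (pd 1 f) x \<noteq> pd 1 (pd 2 f) x"
  define a where "a = pd 2 (pd 1 f) x"
  define b where "b = pd 1 (pd 2 f) x"
  define e where "e = \<bar>a - b\<bar> / 2"
  have e: "e > 0" using ne by (simp add: a_def b_def e_def)
  have "isCont (pd 2 (pd 1 f)) x" using c12 U continuous_on_eq_continuous_at by blast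
  from this[unfolded continuous_at_eps_delta, rule_format, OF e]
  obtain r1 where r1: "r1 > 0" "\<And>y. dist y x < r1 \<Longrightarrow> dist (pd 2 (pd 1 f) y) a < e"
    unfolding a_def by blast
  have "isCont (pd 1 (pd 2 f)) x" using c21 U continuous_on_eq_continuous_at by blast
  from this[unfolded continuous_at_eps_delta, rule_format, OF e]
  obtain r2 where r2: "r2 > 0" "\<And>y. dist y x < r2 \<Longrightarrow> dist (pd 1 (pd 2 f) y) b < e"
    unfolding b_def by blast
  obtain r3 where r3: "r3 > 0" "ball x r3 \<subseteq> U" using U open_contains_ball by blast
  define r where "r = min r1 (min r2 r3)"
  have r: "r > 0" using r1 r2 r3 by (simp add: r_def)
  define h where "h = r / 2"
  have h: "h > 0" using r by (simp add: h_def)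
  obtain x1 x2 where xx: "x = (x1, x2)" by (cases x)
  have box: "dist (x1 + s, x2 + t) x < r" if "0 \<le> s" "s \<le> h" "0 \<le> t" "t \<le> h" for s t
  proof -
    have "dist (x1 + s, x2 + t) x = sqrt (s^2 + t^2)"
      by (simp add: xx dist_Pair_Pair dist_real_def)
    also have "\<dots> \<le> sqrt (h^2 + h^2)"
    proof -
      have "s^2 \<le> h^2" using that by (intro power_mono) auto
      moreover have "t^2 \<le> h^2" using that by (intro power_mono) auto
      ultimately show ?thesis by (intro real_sqrt_le_mono) linarith
    qed
    also have "\<dots> = sqrt 2 * h" using h by (simp add: real_sqrt_mult real_sqrt_abs)
    also have "\<dots> < 2 * h" using h sqrt2_less_2 by simp
    finally show ?thesis by (simp add: h_def)
  qed
  have inU: "(x1 + s, x2 + t) \<in> U" if "0 \<le> s" "s \<le> h" "0 \<le> t" "t \<le> h" for s t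
  proof -
    have "r \<le> r3" by (simp add: r_def)
    then have "(x1 + s, x2 + t) \<in> ball x r3" unfolding mem_ball
      using box[OF that] dist_commute[of x "(x1 + s, x2 + t)"] by linarith
    then show ?thesis using r3(2) by blast
  qed
  have nearA: "dist (pd 2 (pd 1 f) (x1 + s, x2 + t)) a < e" if "0 \<le> s" "s \<le> h" "0 \<le> t" "t \<le> h" for s t
    using box[OF that] r1 unfolding r_def by auto
  have nearB: "dist (pd 1 (pd 2 f) (x1 + s, x2 + t)) b < e" if "0 \<le> s" "s \<le> h" "0 \<le> t" "t \<le> h" for s t
    using box[OF that] r2 unfolding r_def by auto
  define Q where "Q = f (x1 + h, x2 + h) - f (x1 + h, x2) - f (x1, x2 + h) + f (x1, x2)"
  obtain A1 where A1: "Q = h * (h * A1)" "dist A1 a < e"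
  proof -
    have "\<exists>z. 0 < z \<and> z < h \<and>
       (f (x1 + h, x2 + h) - f (x1 + h, x2)) - (f (x1 + 0, x2 + h) - f (x1 + 0, x2))
        = (h - 0) * (pd 1 f (x1 + z, x2 + h) - pd 1 f (x1 + z, x2))"
    proof (rule MVT2[where f = "\<lambda>s. f (x1 + s, x2 + h) - f (x1 + s, x2)"])
      show "0 < h" by fact
      fix s assume "0 \<le> s" "s \<le> h"
      then show "((\<lambda>s. f (x1 + s, x2 + h) - f (x1 + s, x2)) has_real_derivative
              pd 1 f (x1 + s, x2 + h) - pd 1 f (x1 + s, x2)) (at s)"
        using inU[of s h] inU[of s 0] h
        by (intro DERIV_diff dir1_deriv d0) auto
    qed
    then obtain z where z: "0 < z" "z < h"
      "Q = h * (pd 1 f (x1 + z, x2 + h) - pd 1 f (x1 + z, x2))"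
      by (auto simp: Q_def algebra_simps)
    have "\<exists>w. 0 < w \<and> w < h \<and>
       pd 1 f (x1 + z, x2 + h) - pd 1 f (x1 + z, x2 + 0) = (h - 0) * pd 2 (pd 1 f) (x1 + z, x2 + w)"
    proof (rule MVT2[where f = "\<lambda>t. pd 1 f (x1 + z, x2 + t)"])
      show "0 < h" by fact
      fix t assume "0 \<le> t" "t \<le> h"
      then show "((\<lambda>t. pd 1 f (x1 + z, x2 + t)) has_real_derivative pd 2 (pd 1 f) (x1 + z, x2 + t)) (at t)"
        using inU[of z t] z by (intro dir2_deriv d1) auto
    qed
    then obtain w where w: "0 < w" "w < h"
      "pd 1 f (x1 + z, x2 + h) - pd 1 f (x1 + z, x2) = h * pd 2 (pd 1 f) (x1 + z, x2 + w)"
      by auto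
    show ?thesis
    proof (rule that[of "pd 2 (pd 1 f) (x1 + z, x2 + w)"])
      show "Q = h * (h * pd 2 (pd 1 f) (x1 + z, x2 + w))" by (simp only: z(3) w(3))
      show "dist (pd 2 (pd 1 f) (x1 + z, x2 + w)) a < e" using z w by (intro nearA) auto
    qed
  qed
  obtain B1 where B1: "Q = h * (h * B1)" "dist B1 b < e"
  proof -
    have "\<exists>z. 0 < z \<and> z < h \<and>
       (f (x1 + h, x2 + h) - f (x1, x2 + h)) - (f (x1 + h, x2 + 0) - f (x1, x2 + 0))
        = (h - 0) * (pd 2 f (x1 + h, x2 + z) - pd 2 f (x1, x2 + z))"
    proof (rule MVT2[where f = "\<lambda>t. f (x1 + h, x2 + t) - f (x1, x2 + t)"])
      show "0 < h" by fact
      fix t assume "0 \<le> t" "t \<le> h"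
      then show "((\<lambda>t. f (x1 + h, x2 + t) - f (x1, x2 + t)) has_real_derivative
              pd 2 f (x1 + h, x2 + t) - pd 2 f (x1, x2 + t)) (at t)"
        using inU[of h t] inU[of 0 t] h
        by (intro DERIV_diff dir2_deriv d0) auto
    qed
    then obtain z where z: "0 < z" "z < h"
      "Q = h * (pd 2 f (x1 + h, x2 + z) - pd 2 f (x1, x2 + z))"
      by (auto simp: Q_def algebra_simps)
    have "\<exists>w. 0 < w \<and> w < h \<and>
       pd 2 f (x1 + h, x2 + z) - pd 2 f (x1 + 0, x2 + z) = (h - 0) * pd 1 (pd 2 f) (x1 + w, x2 + z)"
    proof (rule MVT2[where f = "\<lambda>s. pd 2 f (x1 + s, x2 + z)"])
      show "0 < h" by fact
      fix s assume "0 \<le> s" "s \<le> h"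
      then show "((\<lambda>s. pd 2 f (x1 + s, x2 + z)) has_real_derivative pd 1 (pd 2 f) (x1 + s, x2 + z)) (at s)"
        using inU[of s z] z by (intro dir1_deriv d2) auto
    qed
    then obtain w where w: "0 < w" "w < h"
      "pd 2 f (x1 + h, x2 + z) - pd 2 f (x1, x2 + z) = h * pd 1 (pd 2 f) (x1 + w, x2 + z)"
      by auto
    show ?thesis
    proof (rule that[of "pd 1 (pd 2 f) (x1 + w, x2 + z)"])
      show "Q = h * (h * pd 1 (pd 2 f) (x1 + w, x2 + z))" by (simp only: z(3) w(3))
      show "dist (pd 1 (pd 2 f) (x1 + w, x2 + z)) b < e" using z w by (intro nearB) auto
    qed
  qed
  have "A1 = B1" using A1(1) B1(1) h by simp
  then have "\<bar>a - b\<bar> < 2 * e" using A1(2) B1(2) by (simp add: dist_real_def)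
  then show False by (simp add: e_def)
qed


lemma line_deriv:
  fixes g :: "real \<times> real \<Rightarrow> real"
  assumes "g differentiable (at (x + t *\<^sub>R (v1, v2)))"
  shows "((\<lambda>s. g (x + s *\<^sub>R (v1, v2))) has_real_derivative
          (v1 * pd 1 g (x + t *\<^sub>R (v1, v2)) + v2 * pd 2 g (x + t *\<^sub>R (v1, v2)))) (at t)"
proof -
  let ?y = "x + t *\<^sub>R (v1, v2)"
  let ?F = "frechet_derivative g (at ?y)"
  have l: "((\<lambda>s. x + s *\<^sub>R (v1, v2)) has_derivative (\<lambda>s. s *\<^sub>R (v1, v2))) (at t)"
    by (auto intro!: derivative_eq_intros)
  note D = has_derivative_compose[OF l fd_works[OF assms]]
  have lin: "linear ?F" using fd_works[OF assms] has_derivative_linear by blast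
  have v: "(v1, v2) = v1 *\<^sub>R (1, 0) + v2 *\<^sub>R (0, 1)" by simp
  have Fv: "?F (v1, v2) = v1 * pd 1 g ?y + v2 * pd 2 g ?y"
    apply (subst v)
    using linear_add[OF lin, of "v1 *\<^sub>R (1, 0)" "v2 *\<^sub>R (0, 1)"]
      linear_scale[OF lin, of v1 "(1, 0)"] linear_scale[OF lin, of v2 "(0, 1)"]
    by (simp add: pd_def ee_def)
  have eq: "(\<lambda>s. ?F (s *\<^sub>R (v1, v2))) = (\<lambda>s. (v1 * pd 1 g ?y + v2 * pd 2 g ?y) * s)"
  proof
    fix s
    show "?F (s *\<^sub>R (v1, v2)) = (v1 * pd 1 g ?y + v2 * pd 2 g ?y) * s"
      using linear_scale[OF lin, of s "(v1, v2)"] Fv by simp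
  qed
  have "((\<lambda>s. g (x + s *\<^sub>R (v1, v2))) has_derivative (\<lambda>s. (v1 * pd 1 g ?y + v2 * pd 2 g ?y) * s)) (at t)"
    using D unfolding eq .
  then show ?thesis by (simp add: has_field_derivative_def)
qed

lemma max_second_1d:
  fixes h k :: "real \<Rightarrow> real"
  assumes d: "d > 0" and mx: "\<And>t. \<bar>t\<bar> < d \<Longrightarrow> h t \<le> h 0"
    and hd: "\<And>t. \<bar>t\<bar> < d \<Longrightarrow> (h has_real_derivative k t) (at t)"
    and kd: "(k has_real_derivative K) (at 0)"
  shows "k 0 = 0" "K \<le> 0"
proof -
  show k0: "k 0 = 0"
    by (rule DERIV_local_max[OF hd[of 0] d]) (use d mx in auto)
  show "K \<le> 0"
  proof (rule ccontr)
    assume "\<not> K \<le> 0"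
    then have "K > 0" by simp
    from DERIV_pos_inc_right[OF kd this] obtain e where e: "e > 0"
      "\<And>s. s > 0 \<Longrightarrow> s < e \<Longrightarrow> k 0 < k (0 + s)" by blast
    define t where "t = min e d / 2"
    have t: "0 < t" "t < e" "t < d" using e d by (auto simp: t_def)
    have "\<exists>z. 0 < z \<and> z < t \<and> h t - h 0 = (t - 0) * k z"
      by (rule MVT2) (use t hd in auto)
    then obtain z where z: "0 < z" "z < t" "h t - h 0 = t * k z" by auto
    have "k z > 0" using e(2)[of z] z t k0 by auto
    then have "h t > h 0" using z t by (simp add: algebra_simps)
    moreover have "h t \<le> h 0" using mx[of t] t by auto
    ultimately show False by simp
  qed
qed

lemma second_test_dir:
  fixes f :: "real \<times> real \<Rightarrow> real"
  assumes U: "open U" "x \<in> U" and mx: "\<And>y. y \<in> U \<Longrightarrow> f y \<le> f x"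
    and d0: "\<And>y. y \<in> U \<Longrightarrow> f differentiable (at y)"
    and d1: "pd 1 f differentiable (at x)" and d2: "pd 2 f differentiable (at x)"
  shows "v1 * pd 1 f x + v2 * pd 2 f x = 0"
    "v1 * (v1 * pd 1 (pd 1 f) x + v2 * pd 2 (pd 1 f) x) + v2 * (v1 * pd 1 (pd 2 f) x + v2 * pd 2 (pd 2 f) x) \<le> 0"
proof -
  obtain r where r: "r > 0" "ball x r \<subseteq> U" using U open_contains_ball by blast
  define nv where "nv = norm (v1, v2)"
  have nv: "nv \<ge> 0" by (simp add: nv_def)
  define d where "d = r / (nv + 1)"
  have d: "d > 0" using r nv by (simp add: d_def)
  have dn: "d * (nv + 1) = r" using nv by (simp add: d_def)
  have inU: "x + t *\<^sub>R (v1, v2) \<in> U" if "\<bar>t\<bar> < d" for t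
  proof -
    have "norm (t *\<^sub>R (v1, v2)) = \<bar>t\<bar> * nv" unfolding nv_def by (rule norm_scaleR)
    also have "\<dots> \<le> \<bar>t\<bar> * (nv + 1)" by (simp add: mult_left_mono)
    also have "\<dots> < d * (nv + 1)"
      using that nv by (intro mult_strict_right_mono) auto
    finally have "norm (t *\<^sub>R (v1, v2)) < r" using dn by simp
    moreover have "dist x (x + t *\<^sub>R (v1, v2)) = norm (t *\<^sub>R (v1, v2))"
      by (metis add_diff_cancel_left' dist_norm dist_commute)
    ultimately have "dist x (x + t *\<^sub>R (v1, v2)) < r" by simp
    then show ?thesis using r(2) by auto
  qed
  define k where "k t = v1 * pd 1 f (x + t *\<^sub>R (v1, v2)) + v2 * pd 2 f (x + t *\<^sub>R (v1, v2))" for t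
  have hd: "((\<lambda>s. f (x + s *\<^sub>R (v1, v2))) has_real_derivative k t) (at t)" if "\<bar>t\<bar> < d" for t
    unfolding k_def by (rule line_deriv) (use d0 inU[OF that] in auto)
  have kd: "(k has_real_derivative
      v1 * (v1 * pd 1 (pd 1 f) x + v2 * pd 2 (pd 1 f) x) + v2 * (v1 * pd 1 (pd 2 f) x + v2 * pd 2 (pd 2 f) x)) (at 0)"
  proof -
    have a: "((\<lambda>s. pd 1 f (x + s *\<^sub>R (v1, v2))) has_real_derivative
          (v1 * pd 1 (pd 1 f) x + v2 * pd 2 (pd 1 f) x)) (at 0)"
      using line_deriv[of "pd 1 f" x 0 v1 v2, unfolded scaleR_zero_left add_0_right] d1 by blast
    have b: "((\<lambda>s. pd 2 f (x + s *\<^sub>R (v1, v2))) has_real_derivative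
          (v1 * pd 1 (pd 2 f) x + v2 * pd 2 (pd 2 f) x)) (at 0)"
      using line_deriv[of "pd 2 f" x 0 v1 v2, unfolded scaleR_zero_left add_0_right] d2 by blast
    show ?thesis unfolding k_def[abs_def]
      by (intro DERIV_add DERIV_cmult a b)
  qed
  have mx': "f (x + t *\<^sub>R (v1, v2)) \<le> f (x + 0 *\<^sub>R (v1, v2))" if "\<bar>t\<bar> < d" for t
    using mx[OF inU[OF that]] unfolding scaleR_zero_left add_0_right .
  note R = max_second_1d[where h = "\<lambda>s. f (x + s *\<^sub>R (v1, v2))", OF d mx' hd kd]
  show "v1 * pd 1 f x + v2 * pd 2 f x = 0" using R(1) unfolding k_def scaleR_zero_left add_0_right .
  show "v1 * (v1 * pd 1 (pd 1 f) x + v2 * pd 2 (pd 1 f) x) + v2 * (v1 * pd 1 (pd 2 f) x + v2 * pd 2 (pd 2 f) x) \<le> 0"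
    using R(2) .
qed

lemma second_test:
  fixes f :: "real \<times> real \<Rightarrow> real"
  assumes U: "open U" "x \<in> U" and mx: "\<And>y. y \<in> U \<Longrightarrow> f y \<le> f x"
    and d0: "\<And>y. y \<in> U \<Longrightarrow> f differentiable (at y)"
    and d1: "pd 1 f differentiable (at x)" and d2: "pd 2 f differentiable (at x)"
    and a: "a > 0" and ac: "a * c - b * b > 0"
  shows "pd 1 f x = 0" "pd 2 f x = 0"
    "a * pd 1 (pd 1 f) x + b * pd 1 (pd 2 f) x + b * pd 2 (pd 1 f) x + c * pd 2 (pd 2 f) x \<le> 0"
proof -
  note T = second_test_dir[OF U mx d0 d1 d2]
  show "pd 1 f x = 0" using T(1)[of 1 0] by simp
  show "pd 2 f x = 0" using T(1)[of 0 1] by simp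
  have q1: "a * (a * pd 1 (pd 1 f) x + b * pd 2 (pd 1 f) x) + b * (a * pd 1 (pd 2 f) x + b * pd 2 (pd 2 f) x) \<le> 0"
    using T(2)[of a b] .
  have q2: "pd 2 (pd 2 f) x \<le> 0" using T(2)[of 0 1] by simp
  have q3: "(a * c - b * b) * pd 2 (pd 2 f) x \<le> 0" using q2 ac by (simp add: mult_nonneg_nonpos)
  have "a * (a * pd 1 (pd 1 f) x + b * pd 1 (pd 2 f) x + b * pd 2 (pd 1 f) x + c * pd 2 (pd 2 f) x) \<le> 0"
    using q1 q3 by (simp add: algebra_simps)
  then show "a * pd 1 (pd 1 f) x + b * pd 1 (pd 2 f) x + b * pd 2 (pd 1 f) x + c * pd 2 (pd 2 f) x \<le> 0"
    using a by (simp add: mult_le_0_iff)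
qed


definition cr :: "real \<times> real \<times> real \<Rightarrow> real \<times> real \<times> real \<Rightarrow> real \<times> real \<times> real" where
  "cr a b = (fst (snd a) * snd (snd b) - snd (snd a) * fst (snd b),
             snd (snd a) * fst b - fst a * snd (snd b),
             fst a * fst (snd b) - fst (snd a) * fst b)"

lemma lagrange_vec:
  fixes v L1 L2 :: "real \<times> real \<times> real"
  shows "((L1 \<bullet> L1) * (L2 \<bullet> L2) - (L1 \<bullet> L2) * (L1 \<bullet> L2)) *\<^sub>R v
     = (v \<bullet> cr L1 L2) *\<^sub>R cr L1 L2
       + ((v \<bullet> L1) * (L2 \<bullet> L2) - (v \<bullet> L2) * (L1 \<bullet> L2)) *\<^sub>R L1
       + ((v \<bullet> L2) * (L1 \<bullet> L1) - (v \<bullet> L1) * (L1 \<bullet> L2)) *\<^sub>R L2"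
proof -
  obtain a b c where v: "v = (a, b, c)" by (metis prod.collapse)
  obtain p q r where L1: "L1 = (p, q, r)" by (metis prod.collapse)
  obtain s t u where L2: "L2 = (s, t, u)" by (metis prod.collapse)
  show ?thesis unfolding v L1 L2
    apply (simp add: cr_def inner_Pair)
    apply (intro conjI)
    apply algebra+
    done
qed

lemma cr_sq:
  fixes L1 L2 :: "real \<times> real \<times> real"
  shows "cr L1 L2 \<bullet> cr L1 L2 = (L1 \<bullet> L1) * (L2 \<bullet> L2) - (L1 \<bullet> L2) * (L1 \<bullet> L2)"
proof -
  obtain p q r where L1: "L1 = (p, q, r)" by (metis prod.collapse)
  obtain s t u where L2: "L2 = (s, t, u)" by (metis prod.collapse)
  show ?thesis unfolding L1 L2
    apply (simp add: cr_def inner_Pair)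
    apply algebra
    done
qed
lemma bilin_decomp:
  fixes v w L1 L2 N :: "real \<times> real \<times> real"
  assumes N1: "N \<bullet> N = 1" and NL1: "N \<bullet> L1 = 0" and NL2: "N \<bullet> L2 = 0"
    and D: "(L1 \<bullet> L1) * (L2 \<bullet> L2) - (L1 \<bullet> L2) * (L1 \<bullet> L2) > 0"
  shows "v \<bullet> w = (v \<bullet> N) * (w \<bullet> N) +
     ((L2 \<bullet> L2) * (v \<bullet> L1) * (w \<bullet> L1) - (L1 \<bullet> L2) * (v \<bullet> L1) * (w \<bullet> L2)
      - (L1 \<bullet> L2) * (v \<bullet> L2) * (w \<bullet> L1) + (L1 \<bullet> L1) * (v \<bullet> L2) * (w \<bullet> L2))
     / ((L1 \<bullet> L1) * (L2 \<bullet> L2) - (L1 \<bullet> L2) * (L1 \<bullet> L2))"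
proof -
  define d where "d = (L1 \<bullet> L1) * (L2 \<bullet> L2) - (L1 \<bullet> L2) * (L1 \<bullet> L2)"
  define K where "K = cr L1 L2"
  have KK: "K \<bullet> K = d" by (simp add: K_def d_def cr_sq)
  have decv: "d *\<^sub>R v = (v \<bullet> K) *\<^sub>R K + ((v \<bullet> L1) * (L2 \<bullet> L2) - (v \<bullet> L2) * (L1 \<bullet> L2)) *\<^sub>R L1
       + ((v \<bullet> L2) * (L1 \<bullet> L1) - (v \<bullet> L1) * (L1 \<bullet> L2)) *\<^sub>R L2"
    unfolding d_def K_def by (rule lagrange_vec)
  have decN: "d *\<^sub>R N = (N \<bullet> K) *\<^sub>R K"
    using lagrange_vec[of L1 L2 N] NL1 NL2 by (simp add: d_def K_def inner_commute)
  have "d * d = (N \<bullet> K) * (N \<bullet> K) * d"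
  proof -
    have "(d *\<^sub>R N) \<bullet> (d *\<^sub>R N) = d * d" using N1 by simp
    moreover have "(d *\<^sub>R N) \<bullet> (d *\<^sub>R N) = (N \<bullet> K) * (N \<bullet> K) * d" unfolding decN using KK by simp
    ultimately show ?thesis by metis
  qed
  moreover have dpos: "d > 0" using D by (simp add: d_def)
  ultimately have NK2: "(N \<bullet> K) * (N \<bullet> K) = d"
    using mult_right_cancel[of d d "(N \<bullet> K) * (N \<bullet> K)"] by simp
  have vN: "d * (v \<bullet> N) = (N \<bullet> K) * (v \<bullet> K)"
  proof -
    have "v \<bullet> (d *\<^sub>R N) = (N \<bullet> K) * (v \<bullet> K)" unfolding decN by simp
    then show ?thesis by simp
  qed
  have wN: "d * (w \<bullet> N) = (N \<bullet> K) * (w \<bullet> K)"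
  proof -
    have "w \<bullet> (d *\<^sub>R N) = (N \<bullet> K) * (w \<bullet> K)" unfolding decN by simp
    then show ?thesis by simp
  qed
  have "d * d * ((v \<bullet> N) * (w \<bullet> N)) = d * ((v \<bullet> K) * (w \<bullet> K))"
  proof -
    have "d * d * ((v \<bullet> N) * (w \<bullet> N)) = (d * (v \<bullet> N)) * (d * (w \<bullet> N))" by (simp add: algebra_simps)
    also have "\<dots> = (N \<bullet> K) * (N \<bullet> K) * ((v \<bullet> K) * (w \<bullet> K))" unfolding vN wN by (simp add: algebra_simps)
    finally show ?thesis unfolding NK2 .
  qed
  then have vwN: "d * ((v \<bullet> N) * (w \<bullet> N)) = (v \<bullet> K) * (w \<bullet> K)"
    using dpos by (simp add: mult.assoc)
  have "d * (v \<bullet> w) = (d *\<^sub>R v) \<bullet> w" by simp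
  also have "\<dots> = (v \<bullet> K) * (w \<bullet> K) + ((v \<bullet> L1) * (L2 \<bullet> L2) - (v \<bullet> L2) * (L1 \<bullet> L2)) * (w \<bullet> L1)
       + ((v \<bullet> L2) * (L1 \<bullet> L1) - (v \<bullet> L1) * (L1 \<bullet> L2)) * (w \<bullet> L2)"
    unfolding decv by (simp add: inner_add_left inner_commute[of w])
  finally have "d * (v \<bullet> w) = d * ((v \<bullet> N) * (w \<bullet> N)) + ((v \<bullet> L1) * (L2 \<bullet> L2) - (v \<bullet> L2) * (L1 \<bullet> L2)) * (w \<bullet> L1)
       + ((v \<bullet> L2) * (L1 \<bullet> L1) - (v \<bullet> L1) * (L1 \<bullet> L2)) * (w \<bullet> L2)"
    using vwN by simp
  then show ?thesis using dpos unfolding d_def[symmetric] by (simp add: field_simps)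
qed


lemma tang_alg:
  fixes E F G p111 p112 p121 p122 p211 p212 p221 p222 gi11 gi12 gi21 gi22 dD1 dD2 dgi111 dgi112 dgi121 dgi122 dgi211 dgi212 dgi221 dgi222 B1 B2 iD :: real
  assumes D: "(E * G - F * F) * iD = 1"
    and s1: "p121 = p211"
    and s2: "p122 = p212"
    and gi11: "gi11 = (G) * iD"
    and gi22: "gi22 = (E) * iD"
    and gi12: "gi12 = (- F) * iD"
    and gi21: "gi21 = (- F) * iD"
    and dD1: "dD1 = (p111 + p111) * G + E * (p122 + p122) - ((p112 + p121) * F + F * (p121 + p112))"
    and dD2: "dD2 = (p211 + p211) * G + E * (p222 + p222) - ((p212 + p221) * F + F * (p221 + p212))"
    and dgi111: "dgi111 = ((p122 + p122)) * iD - (G) * dD1 * iD * iD"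
    and dgi112: "dgi112 = (- (p112 + p121)) * iD - (- F) * dD1 * iD * iD"
    and dgi121: "dgi121 = (- (p121 + p112)) * iD - (- F) * dD1 * iD * iD"
    and dgi122: "dgi122 = ((p111 + p111)) * iD - (E) * dD1 * iD * iD"
    and dgi211: "dgi211 = ((p222 + p222)) * iD - (G) * dD2 * iD * iD"
    and dgi212: "dgi212 = (- (p212 + p221)) * iD - (- F) * dD2 * iD * iD"
    and dgi221: "dgi221 = (- (p221 + p212)) * iD - (- F) * dD2 * iD * iD"
    and dgi222: "dgi222 = ((p211 + p211)) * iD - (E) * dD2 * iD * iD"
    and B1: "B1 = (dgi111 + dD1 * iD / 2 * gi11) + (dgi221 + dD2 * iD / 2 * gi21)"
    and B2: "B2 = (dgi112 + dD1 * iD / 2 * gi12) + (dgi222 + dD2 * iD / 2 * gi22)"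
  shows "gi11 * p111 + gi12 * p121 + gi21 * p211 + gi22 * p221 + B1 * E + B2 * F = 0"
    "gi11 * p112 + gi12 * p122 + gi21 * p212 + gi22 * p222 + B1 * F + B2 * G = 0"

proof -
  show "gi11 * p111 + gi12 * p121 + gi21 * p211 + gi22 * p221 + B1 * E + B2 * F = 0"
    unfolding B1 B2 dgi111 dgi112 dgi121 dgi122 dgi211 dgi212 dgi221 dgi222 dD1 dD2 gi11 gi12 gi21 gi22 s1 s2
    using D by algebra
  show "gi11 * p112 + gi12 * p122 + gi21 * p212 + gi22 * p222 + B1 * F + B2 * G = 0"
    unfolding B1 B2 dgi111 dgi112 dgi121 dgi122 dgi211 dgi212 dgi221 dgi222 dD1 dD2 gi11 gi12 gi21 gi22 s1 s2
    using D by algebra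
qed

lemma sum12: "sum f {1, 2::nat} = f 1 + f 2"
  by simp

lemma Ck_SucD:
  "Ck (Suc k) S f \<Longrightarrow> continuous_on S f \<and> f differentiable_on S \<and> Ck k S (pd 1 f) \<and> Ck k S (pd 2 f)"
  by simp

lemma Ck_diff_at: "open S \<Longrightarrow> y \<in> S \<Longrightarrow> Ck (Suc k) S f \<Longrightarrow> f differentiable (at y)"
  using differentiable_on_eq_differentiable_at by auto

lemma Ck_cont: "Ck k S f \<Longrightarrow> continuous_on S f"
  by (cases k) auto

locale chartpt =
  fixes X :: "real \<times> real \<Rightarrow> real \<times> real \<times> real" and U :: "(real \<times> real) set" and x :: "real \<times> real"
  assumes U: "open U" "x \<in> U" and sm: "Ck 3 U X"
    and indep: "\<forall>a b. a *\<^sub>R pd 1 X x + b *\<^sub>R pd 2 X x = 0 \<longrightarrow> a = 0 \<and> b = 0"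
begin

lemma sm3: "Ck (Suc (Suc (Suc 0))) U X" using sm by (simp add: numeral_3_eq_3)

lemma dX: "y \<in> U \<Longrightarrow> X differentiable (at y)"
  using Ck_diff_at[OF U(1) _ sm3] by blast

lemma Ck2: "Ck (Suc (Suc 0)) U (pd 1 X)" "Ck (Suc (Suc 0)) U (pd 2 X)"
  using sm3 by simp_all

lemma d1X: assumes "y \<in> U" "i \<in> {1,2}" shows "pd i X differentiable (at y)"
  using assms Ck_diff_at[OF U(1) assms(1) Ck2(1)] Ck_diff_at[OF U(1) assms(1) Ck2(2)] by auto

lemma Ck1: "i \<in> {1,2} \<Longrightarrow> j \<in> {1,2} \<Longrightarrow> Ck (Suc 0) U (pd i (pd j X))"
  using Ck2 by auto

lemma d2X: "y \<in> U \<Longrightarrow> i \<in> {1,2} \<Longrightarrow> j \<in> {1,2} \<Longrightarrow> pd i (pd j X) differentiable (at y)"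
  using Ck_diff_at[OF U(1) _ Ck1] by blast

lemma c2X: "i \<in> {1,2} \<Longrightarrow> j \<in> {1,2} \<Longrightarrow> continuous_on U (pd i (pd j X))"
  using Ck_cont[OF Ck1] by blast

lemma sym_inner:
  fixes w :: "real \<times> real \<times> real"
  shows "pd 2 (pd 1 X) x \<bullet> w = pd 1 (pd 2 X) x \<bullet> w"
proof -
  define f where "f y = X y \<bullet> w" for y
  have pf: "pd j f y = pd j X y \<bullet> w" if "y \<in> U" for j y
    unfolding f_def using pd_inner[OF dX[OF that], of "\<lambda>_. w" j] by (simp add: pd_const)
  have pf2: "pd i (pd j f) y = pd i (pd j X) y \<bullet> w" if "y \<in> U" "j \<in> {1,2}" for i j y
  proof -
    have "pd i (pd j f) y = pd i (\<lambda>y. pd j X y \<bullet> w) y"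
      by (rule pd_local[OF U(1) that(1)]) (simp add: pf)
    also have "\<dots> = pd i (pd j X) y \<bullet> w"
      using pd_inner[OF d1X[OF that], of "\<lambda>_. w" i] by (simp add: pd_const)
    finally show ?thesis .
  qed
  have df: "f differentiable (at y)" if "y \<in> U" for y
    unfolding f_def by (rule diff_inner) (use dX[OF that] in auto)
  have dpf: "pd j f differentiable (at y)" if "y \<in> U" "j \<in> {1,2}" for j y
  proof (rule diff_local[OF U(1) that(1)])
    show "pd j X y' \<bullet> w = pd j f y'" if "y' \<in> U" for y' using pf[OF that] by simp
    show "(\<lambda>y. pd j X y \<bullet> w) differentiable (at y)"
      by (rule diff_inner) (use d1X[OF that] in auto)
  qed
  have cpf: "continuous_on U (pd i (pd j f))" if "i \<in> {1,2}" "j \<in> {1,2}" for i j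
  proof -
    have "continuous_on U (\<lambda>y. pd i (pd j X) y \<bullet> w)"
      by (intro continuous_intros c2X that)
    then show ?thesis by (rule continuous_on_cong[THEN iffD1, rotated 2]) (use pf2 that in auto)
  qed
  have "pd 2 (pd 1 f) x = pd 1 (pd 2 f) x"
    by (rule clairaut[OF U]) (use df dpf cpf in auto)
  then show ?thesis using pf2[OF U(2)] by simp
qed

lemma sym: "pd 2 (pd 1 X) x = pd 1 (pd 2 X) x"
proof -
  define w where "w = pd 2 (pd 1 X) x - pd 1 (pd 2 X) x"
  have "w \<bullet> w = 0" using sym_inner[of w] by (simp add: w_def inner_diff_left inner_commute)
  then show ?thesis by (simp add: w_def)
qed

lemma gmet_fun: "gmet X a b = (\<lambda>y. pd a X y \<bullet> pd b X y)"
  by (rule ext) (simp add: gmet_def)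

lemma gdet_fun: "gdet X = (\<lambda>y. gmet X 1 1 y * gmet X 2 2 y - gmet X 1 2 y * gmet X 2 1 y)"
  by (rule ext) (simp add: gdet_def)

lemma ginv_fun:
  "ginv X 1 1 = (\<lambda>y. gmet X 2 2 y / gdet X y)"
  "ginv X 2 2 = (\<lambda>y. gmet X 1 1 y / gdet X y)"
  "ginv X 1 2 = (\<lambda>y. - gmet X 1 2 y / gdet X y)"
  "ginv X 2 1 = (\<lambda>y. - gmet X 2 1 y / gdet X y)"
  by (rule ext, simp add: ginv_def)+

lemma gdx: "gdet X x = (pd 1 X x \<bullet> pd 1 X x) * (pd 2 X x \<bullet> pd 2 X x) - (pd 1 X x \<bullet> pd 2 X x) * (pd 1 X x \<bullet> pd 2 X x)"
  by (simp add: gdet_def gmet_def inner_commute)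

lemma gdpos: "gdet X x > 0"
proof -
  define L1 where "L1 = pd 1 X x"
  define L2 where "L2 = pd 2 X x"
  have L2nz: "L2 \<noteq> 0"
  proof
    assume "L2 = 0"
    then have "0 *\<^sub>R pd 1 X x + 1 *\<^sub>R pd 2 X x = 0" by (simp add: L2_def)
    from indep[rule_format, OF this] show False by simp
  qed
  then have Gp: "L2 \<bullet> L2 > 0" by simp
  define M where "M = (L2 \<bullet> L2) *\<^sub>R L1 - (L1 \<bullet> L2) *\<^sub>R L2"
  have Mnz: "M \<noteq> 0"
  proof
    assume "M = 0"
    then have "(L2 \<bullet> L2) *\<^sub>R pd 1 X x + (- (L1 \<bullet> L2)) *\<^sub>R pd 2 X x = 0"
      by (simp add: M_def L1_def L2_def)
    from indep[rule_format, OF this] show False using Gp by simp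
  qed
  have "M \<bullet> M = (L2 \<bullet> L2) * ((L1 \<bullet> L1) * (L2 \<bullet> L2) - (L1 \<bullet> L2) * (L1 \<bullet> L2))"
    by (simp add: M_def inner_diff_left inner_diff_right inner_commute algebra_simps)
  moreover have "M \<bullet> M > 0" using Mnz by simp
  ultimately have "(L1 \<bullet> L1) * (L2 \<bullet> L2) - (L1 \<bullet> L2) * (L1 \<bullet> L2) > 0"
    using Gp by (simp add: zero_less_mult_iff)
  then show ?thesis by (simp add: gdx L1_def L2_def)
qed

lemma dgm: "a \<in> {1,2} \<Longrightarrow> b \<in> {1,2} \<Longrightarrow> gmet X a b differentiable (at x)"
  unfolding gmet_fun by (rule diff_inner) (use d1X[OF U(2)] in auto)

lemma dgd: "gdet X differentiable (at x)"
  unfolding gdet_fun by (intro differentiable_diff differentiable_mult dgm) auto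

lemma dgi11: "ginv X 1 1 differentiable (at x)"
  unfolding ginv_fun using gdpos by (intro differentiable_divide dgm dgd) auto
lemma dgi22: "ginv X 2 2 differentiable (at x)"
  unfolding ginv_fun using gdpos by (intro differentiable_divide dgm dgd) auto
lemma dgi12: "ginv X 1 2 differentiable (at x)"
  unfolding ginv_fun using gdpos by (intro differentiable_divide differentiable_minus dgm dgd) auto
lemma dgi21: "ginv X 2 1 differentiable (at x)"
  unfolding ginv_fun using gdpos by (intro differentiable_divide differentiable_minus dgm dgd) auto

lemma dsq: "(\<lambda>y. sqrt (gdet X y)) differentiable (at x)"
  by (rule diff_sqrt[OF dgd gdpos])

lemma pgm: "a \<in> {1,2} \<Longrightarrow> b \<in> {1,2} \<Longrightarrow>
  pd k (gmet X a b) x = pd a X x \<bullet> pd k (pd b X) x + pd k (pd a X) x \<bullet> pd b X x"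
  unfolding gmet_fun by (rule pd_inner) (use d1X[OF U(2)] in auto)

lemma pgd: "pd k (gdet X) x = gmet X 1 1 x * pd k (gmet X 2 2) x + pd k (gmet X 1 1) x * gmet X 2 2 x
   - (gmet X 1 2 x * pd k (gmet X 2 1) x + pd k (gmet X 1 2) x * gmet X 2 1 x)"
proof -
  have "pd k (gdet X) x = pd k (\<lambda>y. gmet X 1 1 y * gmet X 2 2 y - gmet X 1 2 y * gmet X 2 1 y) x"
    by (simp only: gdet_fun)
  also have "\<dots> = pd k (\<lambda>y. gmet X 1 1 y * gmet X 2 2 y) x - pd k (\<lambda>y. gmet X 1 2 y * gmet X 2 1 y) x"
    by (rule pd_diff) (intro differentiable_mult dgm; simp)+
  also have "\<dots> = gmet X 1 1 x * pd k (gmet X 2 2) x + pd k (gmet X 1 1) x * gmet X 2 2 x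
   - (gmet X 1 2 x * pd k (gmet X 2 1) x + pd k (gmet X 1 2) x * gmet X 2 1 x)"
    using pd_mult[OF dgm dgm, of 1 1 2 2 k] pd_mult[OF dgm dgm, of 1 2 2 1 k] by simp
  finally show ?thesis .
qed

lemma pgi:
  "pd k (ginv X 1 1) x = pd k (gmet X 2 2) x / gdet X x - gmet X 2 2 x * pd k (gdet X) x / (gdet X x)^2"
  "pd k (ginv X 2 2) x = pd k (gmet X 1 1) x / gdet X x - gmet X 1 1 x * pd k (gdet X) x / (gdet X x)^2"
  "pd k (ginv X 1 2) x = - pd k (gmet X 1 2) x / gdet X x - (- gmet X 1 2 x) * pd k (gdet X) x / (gdet X x)^2"
  "pd k (ginv X 2 1) x = - pd k (gmet X 2 1) x / gdet X x - (- gmet X 2 1 x) * pd k (gdet X) x / (gdet X x)^2"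
proof -
  have nz: "gdet X x \<noteq> 0" using gdpos by simp
  show "pd k (ginv X 1 1) x = pd k (gmet X 2 2) x / gdet X x - gmet X 2 2 x * pd k (gdet X) x / (gdet X x)^2"
    unfolding ginv_fun by (rule pd_divide[OF dgm dgd nz]) auto
  show "pd k (ginv X 2 2) x = pd k (gmet X 1 1) x / gdet X x - gmet X 1 1 x * pd k (gdet X) x / (gdet X x)^2"
    unfolding ginv_fun by (rule pd_divide[OF dgm dgd nz]) auto
  show "pd k (ginv X 1 2) x = - pd k (gmet X 1 2) x / gdet X x - (- gmet X 1 2 x) * pd k (gdet X) x / (gdet X x)^2"
    unfolding ginv_fun
    using pd_divide[OF differentiable_minus[OF dgm] dgd nz, of 1 2 k] pd_minus[OF dgm, of 1 2 k] by simp
  show "pd k (ginv X 2 1) x = - pd k (gmet X 2 1) x / gdet X x - (- gmet X 2 1 x) * pd k (gdet X) x / (gdet X x)^2"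
    unfolding ginv_fun
    using pd_divide[OF differentiable_minus[OF dgm] dgd nz, of 2 1 k] pd_minus[OF dgm, of 2 1 k] by simp
qed

lemma psq: "pd k (\<lambda>y. sqrt (gdet X y)) x = pd k (gdet X) x / (2 * sqrt (gdet X x))"
  by (rule pd_sqrt[OF dgd gdpos])

definition Bc :: "nat \<Rightarrow> real" where
  "Bc j = (pd 1 (ginv X 1 j) x + pd 1 (\<lambda>y. sqrt (gdet X y)) x / sqrt (gdet X x) * ginv X 1 j x)
        + (pd 2 (ginv X 2 j) x + pd 2 (\<lambda>y. sqrt (gdet X y)) x / sqrt (gdet X x) * ginv X 2 j x)"

lemma lap_expand:
  assumes "pd 1 w differentiable (at x)" "pd 2 w differentiable (at x)"
  shows "lap X w x = ginv X 1 1 x * pd 1 (pd 1 w) x + ginv X 1 2 x * pd 1 (pd 2 w) x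
     + ginv X 2 1 x * pd 2 (pd 1 w) x + ginv X 2 2 x * pd 2 (pd 2 w) x + Bc 1 * pd 1 w x + Bc 2 * pd 2 w x"
proof -
  have sq: "sqrt (gdet X x) > 0" using gdpos by simp
  note T1 = pd_lapterm[OF dsq dgi11 dgi12 assms, of 1]
  note T2 = pd_lapterm[OF dsq dgi21 dgi22 assms, of 2]
  have "lap X w x = (pd 1 (\<lambda>y. sqrt (gdet X y) * (ginv X 1 1 y * pd 1 w y + ginv X 1 2 y * pd 2 w y)) x
       + pd 2 (\<lambda>y. sqrt (gdet X y) * (ginv X 2 1 y * pd 1 w y + ginv X 2 2 y * pd 2 w y)) x) / sqrt (gdet X x)"
    by (simp only: lap_def sum12)
  also have "\<dots> = ginv X 1 1 x * pd 1 (pd 1 w) x + ginv X 1 2 x * pd 1 (pd 2 w) x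
     + ginv X 2 1 x * pd 2 (pd 1 w) x + ginv X 2 2 x * pd 2 (pd 2 w) x + Bc 1 * pd 1 w x + Bc 2 * pd 2 w x"
  proof -
    define q where "q = sqrt (gdet X x)"
    have q: "q > 0" using sq q_def by simp
    show ?thesis unfolding T1 T2 Bc_def q_def[symmetric] using q by (simp add: field_simps)
  qed
  finally show ?thesis .
qed

end


declare One_nat_def [simp del]



context chartpt
begin

lemma Gpos: "pd 2 X x \<bullet> pd 2 X x > 0"
proof -
  have "pd 2 X x \<noteq> 0"
  proof
    assume "pd 2 X x = 0"
    then have "0 *\<^sub>R pd 1 X x + 1 *\<^sub>R pd 2 X x = 0" by simp
    from indep[rule_format, OF this] show False by simp
  qed
  then show ?thesis by simp
qed

lemma ginv_x:
  "ginv X 1 1 x = (pd 2 X x \<bullet> pd 2 X x) / gdet X x"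
  "ginv X 2 2 x = (pd 1 X x \<bullet> pd 1 X x) / gdet X x"
  "ginv X 1 2 x = - (pd 1 X x \<bullet> pd 2 X x) / gdet X x"
  "ginv X 2 1 x = - (pd 1 X x \<bullet> pd 2 X x) / gdet X x"
  by (simp_all add: ginv_def gmet_def inner_commute One_nat_def[symmetric])

lemma ginv_form:
  "ginv X 1 1 x * a1 * b1 + ginv X 1 2 x * a1 * b2 + ginv X 2 1 x * a2 * b1 + ginv X 2 2 x * a2 * b2
   = ((pd 2 X x \<bullet> pd 2 X x) * a1 * b1 - (pd 1 X x \<bullet> pd 2 X x) * a1 * b2
      - (pd 1 X x \<bullet> pd 2 X x) * a2 * b1 + (pd 1 X x \<bullet> pd 1 X x) * a2 * b2) / gdet X x"
  unfolding ginv_x using gdpos by (simp add: field_simps)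

definition V :: "real \<times> real \<times> real" where
  "V = ginv X 1 1 x *\<^sub>R pd 1 (pd 1 X) x + ginv X 1 2 x *\<^sub>R pd 1 (pd 2 X) x
     + ginv X 2 1 x *\<^sub>R pd 2 (pd 1 X) x + ginv X 2 2 x *\<^sub>R pd 2 (pd 2 X) x
     + Bc 1 *\<^sub>R pd 1 X x + Bc 2 *\<^sub>R pd 2 X x"

lemma VL: "V \<bullet> pd 1 X x = 0" "V \<bullet> pd 2 X x = 0"
proof -
  define E where "E = pd 1 X x \<bullet> pd 1 X x"
  define F where "F = pd 1 X x \<bullet> pd 2 X x"
  define G where "G = pd 2 X x \<bullet> pd 2 X x"
  define iD where "iD = 1 / gdet X x"
  define P where "P k a b = pd k (pd a X) x \<bullet> pd b X x" for k a b :: nat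
  have gd: "gdet X x = E * G - F * F" by (simp add: gdx E_def F_def G_def)
  have D: "(E * G - F * F) * iD = 1" using gdpos by (simp add: iD_def gd)
  have s1: "P 1 2 1 = P 2 1 1" by (simp add: P_def sym)
  have s2: "P 1 2 2 = P 2 1 2" by (simp add: P_def sym)
  have gi11: "ginv X 1 1 x = (G) * iD" by (simp add: ginv_x G_def iD_def)
  have gi22: "ginv X 2 2 x = (E) * iD" by (simp add: ginv_x E_def iD_def)
  have gi12: "ginv X 1 2 x = (- F) * iD" by (simp add: ginv_x F_def iD_def)
  have gi21: "ginv X 2 1 x = (- F) * iD" by (simp add: ginv_x F_def iD_def)
  have pg: "pd k (gmet X a b) x = P k a b + P k b a" if "a \<in> {1,2}" "b \<in> {1,2}" for k a b
    using pgm[OF that, of k] by (simp add: P_def inner_commute)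
  have gx: "gmet X 1 1 x = E" "gmet X 2 2 x = G" "gmet X 1 2 x = F" "gmet X 2 1 x = F"
    by (simp_all add: gmet_def E_def F_def G_def inner_commute)
  have dD: "pd k (gdet X) x = (P k 1 1 + P k 1 1) * G + E * (P k 2 2 + P k 2 2)
      - ((P k 1 2 + P k 2 1) * F + F * (P k 2 1 + P k 1 2))" for k
    unfolding pgd gx pg[of 1 1 k, simplified] pg[of 2 2 k, simplified] pg[of 1 2 k, simplified] pg[of 2 1 k, simplified]
    by (simp add: algebra_simps)
  have dgi11: "pd k (ginv X 1 1) x = (P k 2 2 + P k 2 2) * iD - (G) * pd k (gdet X) x * iD * iD" for k
    unfolding pgi gx pg[of 2 2 k, simplified] iD_def by (simp add: power2_eq_square)
  have dgi22: "pd k (ginv X 2 2) x = (P k 1 1 + P k 1 1) * iD - (E) * pd k (gdet X) x * iD * iD" for k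
    unfolding pgi gx pg[of 1 1 k, simplified] iD_def by (simp add: power2_eq_square)
  have dgi12: "pd k (ginv X 1 2) x = (- (P k 1 2 + P k 2 1)) * iD - (- F) * pd k (gdet X) x * iD * iD" for k
    unfolding pgi gx pg[of 1 2 k, simplified] iD_def by (simp add: power2_eq_square)
  have dgi21: "pd k (ginv X 2 1) x = (- (P k 2 1 + P k 1 2)) * iD - (- F) * pd k (gdet X) x * iD * iD" for k
    unfolding pgi gx pg[of 2 1 k, simplified] iD_def by (simp add: power2_eq_square)
  have sqq: "pd k (\<lambda>y. sqrt (gdet X y)) x / sqrt (gdet X x) = pd k (gdet X) x * iD / 2" for k
    unfolding psq iD_def using gdpos by (simp add: field_simps)
  have B: "Bc j = (pd 1 (ginv X 1 j) x + pd 1 (gdet X) x * iD / 2 * ginv X 1 j x)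
     + (pd 2 (ginv X 2 j) x + pd 2 (gdet X) x * iD / 2 * ginv X 2 j x)" for j
    unfolding Bc_def sqq ..
  note A = tang_alg[OF D s1 s2 gi11 gi22 gi12 gi21 dD[of 1] dD[of 2]
     dgi11[of 1] dgi12[of 1] dgi21[of 1] dgi22[of 1] dgi11[of 2] dgi12[of 2] dgi21[of 2] dgi22[of 2]
     B[of 1] B[of 2]]
  show "V \<bullet> pd 1 X x = 0"
    using A(1) unfolding V_def P_def E_def F_def
    by (simp add: inner_add_left inner_add_right inner_commute)
  show "V \<bullet> pd 2 X x = 0"
    using A(2) unfolding V_def P_def E_def F_def G_def
    by (simp add: inner_add_left inner_add_right inner_commute)
qed

definition gam :: "real \<times> real \<Rightarrow> real" where "gam y = X y \<bullet> X y"

lemma dgam: "y \<in> U \<Longrightarrow> gam differentiable (at y)"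
  unfolding gam_def[abs_def] by (rule diff_inner) (use dX in auto)

lemma pgam: "y \<in> U \<Longrightarrow> pd j gam y = X y \<bullet> pd j X y + pd j X y \<bullet> X y"
  unfolding gam_def[abs_def] by (rule pd_inner) (use dX in auto)

lemma pgam_x: "pd j gam x = 2 * (X x \<bullet> pd j X x)"
  using pgam[OF U(2)] by (simp add: inner_commute)

lemma dpgam: "j \<in> {1,2} \<Longrightarrow> pd j gam differentiable (at x)"
proof (rule diff_local[OF U(1) U(2)])
  assume j: "j \<in> {1,2}"
  show "X y \<bullet> pd j X y + pd j X y \<bullet> X y = pd j gam y" if "y \<in> U" for y using pgam[OF that] by simp
  show "(\<lambda>y. X y \<bullet> pd j X y + pd j X y \<bullet> X y) differentiable (at x)"
    by (intro differentiable_add diff_inner dX d1X U j)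
qed

lemma ppgam: "j \<in> {1,2} \<Longrightarrow> pd i (pd j gam) x = 2 * (X x \<bullet> pd i (pd j X) x) + 2 * (pd i X x \<bullet> pd j X x)"
proof -
  assume j: "j \<in> {1,2}"
  have "pd i (pd j gam) x = pd i (\<lambda>y. X y \<bullet> pd j X y + pd j X y \<bullet> X y) x"
    by (rule pd_local[OF U(1) U(2)]) (simp add: pgam)
  also have "\<dots> = pd i (\<lambda>y. X y \<bullet> pd j X y) x + pd i (\<lambda>y. pd j X y \<bullet> X y) x"
    by (rule pd_add) (intro diff_inner dX d1X U j)+
  also have "\<dots> = 2 * (X x \<bullet> pd i (pd j X) x) + 2 * (pd i X x \<bullet> pd j X x)"
    using pd_inner[OF dX[OF U(2)] d1X[OF U(2) j], of i] pd_inner[OF d1X[OF U(2) j] dX[OF U(2)], of i]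
    by (simp add: inner_commute)
  finally show ?thesis .
qed

lemma sumg2: "ginv X 1 1 x * (pd 1 X x \<bullet> pd 1 X x) + ginv X 1 2 x * (pd 1 X x \<bullet> pd 2 X x)
   + ginv X 2 1 x * (pd 2 X x \<bullet> pd 1 X x) + ginv X 2 2 x * (pd 2 X x \<bullet> pd 2 X x) = 2"
proof -
  have e: "(pd 2 X x \<bullet> pd 2 X x) * (pd 1 X x \<bullet> pd 1 X x) - (pd 1 X x \<bullet> pd 2 X x) * (pd 1 X x \<bullet> pd 2 X x)
     - (pd 1 X x \<bullet> pd 2 X x) * (pd 1 X x \<bullet> pd 2 X x) + (pd 1 X x \<bullet> pd 1 X x) * (pd 2 X x \<bullet> pd 2 X x) = 2 * gdet X x"
    by (simp add: gdx algebra_simps)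
  have "ginv X 1 1 x * (pd 1 X x \<bullet> pd 1 X x) + ginv X 1 2 x * (pd 1 X x \<bullet> pd 2 X x)
   + ginv X 2 1 x * (pd 2 X x \<bullet> pd 1 X x) + ginv X 2 2 x * (pd 2 X x \<bullet> pd 2 X x)
   = ((pd 2 X x \<bullet> pd 2 X x) * (pd 1 X x \<bullet> pd 1 X x) - (pd 1 X x \<bullet> pd 2 X x) * (pd 1 X x \<bullet> pd 2 X x)
     - (pd 1 X x \<bullet> pd 2 X x) * (pd 1 X x \<bullet> pd 2 X x) + (pd 1 X x \<bullet> pd 1 X x) * (pd 2 X x \<bullet> pd 2 X x)) / gdet X x"
    unfolding ginv_x using gdpos by (simp add: field_simps inner_commute)
  also have "\<dots> = 2" unfolding e using gdpos by simp
  finally show ?thesis .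
qed

lemma lap_gam: "lap X gam x = 4 + 2 * (X x \<bullet> V)"
proof -
  have "lap X gam x = ginv X 1 1 x * pd 1 (pd 1 gam) x + ginv X 1 2 x * pd 1 (pd 2 gam) x
     + ginv X 2 1 x * pd 2 (pd 1 gam) x + ginv X 2 2 x * pd 2 (pd 2 gam) x + Bc 1 * pd 1 gam x + Bc 2 * pd 2 gam x"
    by (rule lap_expand) (auto intro: dpgam)
  also have "\<dots> = 2 * (ginv X 1 1 x * (pd 1 X x \<bullet> pd 1 X x) + ginv X 1 2 x * (pd 1 X x \<bullet> pd 2 X x)
   + ginv X 2 1 x * (pd 2 X x \<bullet> pd 1 X x) + ginv X 2 2 x * (pd 2 X x \<bullet> pd 2 X x)) + 2 * (X x \<bullet> V)"
    unfolding ppgam[of 1, simplified] ppgam[of 2, simplified] pgam_x V_def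
    by (simp add: inner_add_right algebra_simps)
  finally show ?thesis unfolding sumg2 by simp
qed

end

locale chartgeo = chartpt +
  fixes Nl :: "real \<times> real \<Rightarrow> real \<times> real \<times> real" and \<phi> :: "real \<Rightarrow> real"
  assumes N1: "norm (Nl x) = 1" and NL1: "Nl x \<bullet> pd 1 X x = 0" and NL2: "Nl x \<bullet> pd 2 X x = 0"
    and mc: "mean_curv_vec X Nl x = (deriv \<phi> (e3comp (X x)) * e3comp (Nl x)) *\<^sub>R Nl x"
    and dphi: "\<phi> differentiable (at (e3comp (X x)))"
begin

lemma NN: "Nl x \<bullet> Nl x = 1" using N1 by (simp add: dot_square_norm)

lemma decomp: "v \<bullet> w = (v \<bullet> Nl x) * (w \<bullet> Nl x) +
     ((pd 2 X x \<bullet> pd 2 X x) * (v \<bullet> pd 1 X x) * (w \<bullet> pd 1 X x) - (pd 1 X x \<bullet> pd 2 X x) * (v \<bullet> pd 1 X x) * (w \<bullet> pd 2 X x)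
      - (pd 1 X x \<bullet> pd 2 X x) * (v \<bullet> pd 2 X x) * (w \<bullet> pd 1 X x) + (pd 1 X x \<bullet> pd 1 X x) * (v \<bullet> pd 2 X x) * (w \<bullet> pd 2 X x))
     / gdet X x"
  unfolding gdx by (rule bilin_decomp[OF NN NL1 NL2]) (use gdpos gdx in simp)

lemma decomp_g: "v \<bullet> w = (v \<bullet> Nl x) * (w \<bullet> Nl x) +
     (ginv X 1 1 x * (v \<bullet> pd 1 X x) * (w \<bullet> pd 1 X x) + ginv X 1 2 x * (v \<bullet> pd 1 X x) * (w \<bullet> pd 2 X x)
     + ginv X 2 1 x * (v \<bullet> pd 2 X x) * (w \<bullet> pd 1 X x) + ginv X 2 2 x * (v \<bullet> pd 2 X x) * (w \<bullet> pd 2 X x))"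
  unfolding ginv_form by (rule decomp)

lemma VN: "V \<bullet> Nl x = deriv \<phi> (e3comp (X x)) * e3comp (Nl x)"
proof -
  have "mean_curv_vec X Nl x = (V \<bullet> Nl x) *\<^sub>R Nl x"
    unfolding mean_curv_vec_def V_def using NL1 NL2
    by (simp add: sum12 inner_add_left sym algebra_simps inner_commute)
  then have "(V \<bullet> Nl x) *\<^sub>R Nl x = (deriv \<phi> (e3comp (X x)) * e3comp (Nl x)) *\<^sub>R Nl x"
    using mc by metis
  moreover have "Nl x \<noteq> 0" using N1 by auto
  ultimately show ?thesis using scaleR_cancel_right by blast
qed

lemma XV: "X x \<bullet> V = (X x \<bullet> Nl x) * (deriv \<phi> (e3comp (X x)) * e3comp (Nl x))"
  using decomp_g[of "X x" V] VL VN by (simp add: inner_commute)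

lemma pphi: "pd i (\<lambda>y. \<phi> (e3comp (X y))) x = deriv \<phi> (e3comp (X x)) * (pd i X x \<bullet> (0, 0, 1))"
proof -
  have e: "(\<lambda>y. e3comp (X y)) = (\<lambda>y. X y \<bullet> (0, 0, 1))" by (simp add: e3comp_def[abs_def])
  have de: "(\<lambda>y. e3comp (X y)) differentiable (at x)"
    unfolding e by (rule diff_inner) (use dX[OF U(2)] in auto)
  have "pd i (\<lambda>y. e3comp (X y)) x = pd i X x \<bullet> (0, 0, 1)"
    unfolding e using pd_inner[OF dX[OF U(2)], of "\<lambda>_. (0,0,1)" i] by (simp add: pd_const)
  then show ?thesis using pd_comp[OF de dphi, of i] by simp
qed

lemma grad_phi_gam: "grad_inner X (\<lambda>y. \<phi> (e3comp (X y))) gam x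
   = 2 * deriv \<phi> (e3comp (X x)) * (e3comp (X x) - e3comp (Nl x) * (X x \<bullet> Nl x))"
proof -
  define e3 :: "real \<times> real \<times> real" where "e3 = (0, 0, 1)"
  have "grad_inner X (\<lambda>y. \<phi> (e3comp (X y))) gam x = 2 * deriv \<phi> (e3comp (X x)) *
      (ginv X 1 1 x * (e3 \<bullet> pd 1 X x) * (X x \<bullet> pd 1 X x) + ginv X 1 2 x * (e3 \<bullet> pd 1 X x) * (X x \<bullet> pd 2 X x)
     + ginv X 2 1 x * (e3 \<bullet> pd 2 X x) * (X x \<bullet> pd 1 X x) + ginv X 2 2 x * (e3 \<bullet> pd 2 X x) * (X x \<bullet> pd 2 X x))"
    unfolding grad_inner_def sum12 pphi pgam_x e3_def by (simp add: algebra_simps inner_commute)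
  also have "\<dots> = 2 * deriv \<phi> (e3comp (X x)) * (e3 \<bullet> X x - (e3 \<bullet> Nl x) * (X x \<bullet> Nl x))"
    using decomp_g[of e3 "X x"] by simp
  finally show ?thesis by (simp add: e3comp_def e3_def inner_commute)
qed

lemma phi_lap_gam: "phi_lap \<phi> X gam x = 4 + 2 * deriv \<phi> (e3comp (X x)) * e3comp (X x)"
  unfolding phi_lap_def lap_gam XV grad_phi_gam by (simp add: algebra_simps)

lemma grad_gam: "grad_inner X gam gam x \<le> 4 * gam x"
proof -
  have "grad_inner X gam gam x = 4 *
      (ginv X 1 1 x * (X x \<bullet> pd 1 X x) * (X x \<bullet> pd 1 X x) + ginv X 1 2 x * (X x \<bullet> pd 1 X x) * (X x \<bullet> pd 2 X x)
     + ginv X 2 1 x * (X x \<bullet> pd 2 X x) * (X x \<bullet> pd 1 X x) + ginv X 2 2 x * (X x \<bullet> pd 2 X x) * (X x \<bullet> pd 2 X x))"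
    unfolding grad_inner_def sum12 pgam_x by (simp add: algebra_simps)
  also have "\<dots> = 4 * (X x \<bullet> X x - (X x \<bullet> Nl x) * (X x \<bullet> Nl x))"
    using decomp_g[of "X x" "X x"] by simp
  also have "\<dots> \<le> 4 * gam x" by (simp add: gam_def)
  finally show ?thesis .
qed

end



context chartgeo
begin

lemma ginv_sym: "ginv X 2 1 x = ginv X 1 2 x" by (simp add: ginv_x)

lemma ginv_a: "ginv X 1 1 x > 0"
  unfolding ginv_x using Gpos gdpos by simp

lemma ginv_ac: "ginv X 1 1 x * ginv X 2 2 x - ginv X 1 2 x * ginv X 1 2 x > 0"
proof -
  have "ginv X 1 1 x * ginv X 2 2 x - ginv X 1 2 x * ginv X 1 2 x
     = ((pd 1 X x \<bullet> pd 1 X x) * (pd 2 X x \<bullet> pd 2 X x) - (pd 1 X x \<bullet> pd 2 X x) * (pd 1 X x \<bullet> pd 2 X x)) / (gdet X x * gdet X x)"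
    unfolding ginv_x using gdpos by (simp add: field_simps)
  also have "\<dots> = 1 / gdet X x" unfolding gdx[symmetric] using gdpos by simp
  finally show ?thesis using gdpos by simp
qed

lemma compare:
  fixes w :: "real \<times> real \<Rightarrow> real" and \<epsilon> :: real
  assumes w2: "Ck 2 U w" and eps: "\<epsilon> > 0"
    and mx: "\<And>y. y \<in> U \<Longrightarrow> w y - \<epsilon> * gam y \<le> w x - \<epsilon> * gam x"
  shows "phi_lap \<phi> X w x \<le> \<epsilon> * phi_lap \<phi> X gam x"
    "grad_inner X w w x = \<epsilon>^2 * grad_inner X gam gam x"
proof -
  have w2': "Ck (Suc (Suc 0)) U w" using w2 by (simp add: numeral_2_eq_2)
  have dw: "w differentiable (at y)" if "y \<in> U" for y using Ck_diff_at[OF U(1) that w2'] .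
  have Ck1w: "Ck (Suc 0) U (pd 1 w)" "Ck (Suc 0) U (pd 2 w)" using w2' by simp_all
  have dpw: "pd j w differentiable (at x)" if "j \<in> {1,2}" for j
    using that Ck_diff_at[OF U Ck1w(1)] Ck_diff_at[OF U Ck1w(2)] by auto
  define f where "f y = w y - \<epsilon> * gam y" for y
  have dcg: "(\<lambda>y. \<epsilon> * gam y) differentiable (at y)" if "y \<in> U" for y
    using dgam[OF that] by simp
  have df: "f differentiable (at y)" if "y \<in> U" for y
    unfolding f_def[abs_def] using dw[OF that] dcg[OF that] by (rule differentiable_diff)
  have pf: "pd j f y = pd j w y - \<epsilon> * pd j gam y" if "y \<in> U" for j y
    unfolding f_def[abs_def] pd_diff[OF dw[OF that] dcg[OF that]] pd_cmult[OF dgam[OF that]] ..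
  have dpf: "pd j f differentiable (at x)" if "j \<in> {1,2}" for j
  proof (rule diff_local[OF U])
    show "pd j w y - \<epsilon> * pd j gam y = pd j f y" if "y \<in> U" for y using pf[OF that] by simp
    show "(\<lambda>y. pd j w y - \<epsilon> * pd j gam y) differentiable (at x)"
      using dpw[OF that] dpgam[OF that] by simp
  qed
  have ppf: "pd i (pd j f) x = pd i (pd j w) x - \<epsilon> * pd i (pd j gam) x" if "j \<in> {1,2}" for i j
  proof -
    have "pd i (pd j f) x = pd i (\<lambda>y. pd j w y - \<epsilon> * pd j gam y) x"
      by (rule pd_local[OF U]) (simp add: pf)
    also have "\<dots> = pd i (pd j w) x - \<epsilon> * pd i (pd j gam) x"
      using pd_diff[OF dpw[OF that], of "\<lambda>y. \<epsilon> * pd j gam y" i] pd_cmult[OF dpgam[OF that], of i \<epsilon>]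
        dpgam[OF that] by simp
    finally show ?thesis .
  qed
  have mxf: "f y \<le> f x" if "y \<in> U" for y using mx[OF that] by (simp add: f_def)
  note ST = second_test[OF U mxf df dpf dpf ginv_a ginv_ac]
  have pw1: "pd 1 w x = \<epsilon> * pd 1 gam x" using ST(1) pf[OF U(2), of 1] by simp
  have pw2: "pd 2 w x = \<epsilon> * pd 2 gam x" using ST(2) pf[OF U(2), of 2] by simp
  have ineq: "ginv X 1 1 x * pd 1 (pd 1 f) x + ginv X 1 2 x * pd 1 (pd 2 f) x
      + ginv X 1 2 x * pd 2 (pd 1 f) x + ginv X 2 2 x * pd 2 (pd 2 f) x \<le> 0"
    using ST(3) by simp
  have lw: "lap X w x = ginv X 1 1 x * pd 1 (pd 1 w) x + ginv X 1 2 x * pd 1 (pd 2 w) x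
     + ginv X 2 1 x * pd 2 (pd 1 w) x + ginv X 2 2 x * pd 2 (pd 2 w) x + Bc 1 * pd 1 w x + Bc 2 * pd 2 w x"
    by (rule lap_expand) (auto intro: dpw)
  have lg: "lap X gam x = ginv X 1 1 x * pd 1 (pd 1 gam) x + ginv X 1 2 x * pd 1 (pd 2 gam) x
     + ginv X 2 1 x * pd 2 (pd 1 gam) x + ginv X 2 2 x * pd 2 (pd 2 gam) x + Bc 1 * pd 1 gam x + Bc 2 * pd 2 gam x"
    by (rule lap_expand) (auto intro: dpgam)
  have "lap X w x - \<epsilon> * lap X gam x =
      ginv X 1 1 x * pd 1 (pd 1 f) x + ginv X 1 2 x * pd 1 (pd 2 f) x
      + ginv X 1 2 x * pd 2 (pd 1 f) x + ginv X 2 2 x * pd 2 (pd 2 f) x"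
    unfolding lw lg ppf[of 1, simplified] ppf[of 2, simplified] ginv_sym pw1 pw2
    by (simp add: algebra_simps)
  then have lap_le: "lap X w x \<le> \<epsilon> * lap X gam x" using ineq by simp
  have gr: "grad_inner X (\<lambda>y. \<phi> (e3comp (X y))) w x = \<epsilon> * grad_inner X (\<lambda>y. \<phi> (e3comp (X y))) gam x"
    unfolding grad_inner_def sum12 pw1 pw2 by (simp add: algebra_simps)
  show "phi_lap \<phi> X w x \<le> \<epsilon> * phi_lap \<phi> X gam x"
    unfolding phi_lap_def gr using lap_le by (simp add: algebra_simps)
  show "grad_inner X w w x = \<epsilon>^2 * grad_inner X gam gam x"
    unfolding grad_inner_def sum12 pw1 pw2 by (simp add: algebra_simps power2_eq_square)
qed

end



lemma cont_from_charts:
  fixes g :: "'m::t2_space \<Rightarrow> 'b::topological_space"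
  assumes cover: "(\<Union>(U, c)\<in>A. c ` U) = UNIV"
    and ch: "\<And>U c. (U, c) \<in> A \<Longrightarrow> open (c ` U) \<and> (\<exists>c'. homeomorphism U (c ` U) c c') \<and> continuous_on U (g \<circ> c)"
  shows "continuous_on UNIV g"
proof -
  have "isCont g p" for p
  proof -
    have "p \<in> (\<Union>(U, c)\<in>A. c ` U)" using cover by simp
    then obtain U c where Uc: "(U, c) \<in> A" "p \<in> c ` U" by blast
    from ch[OF Uc(1)] obtain c' where o: "open (c ` U)" and h: "homeomorphism U (c ` U) c c'"
      and cg: "continuous_on U (g \<circ> c)" by blast
    have c'U: "c' ` (c ` U) = U" and cc': "\<And>q. q \<in> c ` U \<Longrightarrow> c (c' q) = q"
      and cc: "continuous_on (c ` U) c'"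
      using h by (auto simp: homeomorphism_def)
    have "continuous_on (c ` U) ((g \<circ> c) \<circ> c')"
      by (rule continuous_on_compose[OF cc]) (simp only: c'U cg)
    then have "continuous_on (c ` U) g"
      by (rule continuous_on_cong[THEN iffD1, rotated 2]) (auto simp: cc')
    then show "isCont g p" using o Uc(2) continuous_on_eq_continuous_at by blast
  qed
  then show ?thesis by (simp add: continuous_at_imp_continuous_on)
qed

lemma chart_ok:
  fixes A :: "((real \<times> real) set \<times> (real \<times> real \<Rightarrow> 'm::{t2_space, second_countable_topology})) set"
  assumes imm: "immersed_surface A F N" and pm: "phi_minimal A F N \<phi>" and sp: "smooth_real \<phi>"
    and Uc: "(U, c) \<in> A" and x: "x \<in> U"
  shows "chartgeo (F \<circ> c) U x (N \<circ> c) \<phi>"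
proof -
  have A1: "open U" using imm Uc unfolding immersed_surface_def by fastforce
  have A2: "smooth2 U (F \<circ> c)" using imm Uc unfolding immersed_surface_def by fastforce
  have A3: "(\<forall>a b. a *\<^sub>R pd 1 (F \<circ> c) x + b *\<^sub>R pd 2 (F \<circ> c) x = 0 \<longrightarrow> a = 0 \<and> b = 0)
                 \<and> norm (N (c x)) = 1
                 \<and> N (c x) \<bullet> pd 1 (F \<circ> c) x = 0 \<and> N (c x) \<bullet> pd 2 (F \<circ> c) x = 0"
    using imm Uc x unfolding immersed_surface_def by fastforce
  have A4: "mean_curv_vec (F \<circ> c) (N \<circ> c) x = (deriv \<phi> (e3comp (F (c x))) * e3comp (N (c x))) *\<^sub>R N (c x)"
    using pm Uc x unfolding phi_minimal_def by fastforce
  have A5: "\<phi> differentiable (at t)" for t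
    using sp unfolding smooth_real_def by (metis funpow_0)
  show ?thesis
  proof (intro chartgeo.intro chartpt.intro chartgeo_axioms.intro)
    show "open U" "x \<in> U" by (fact A1, fact x)
    show "Ck 3 U (F \<circ> c)" using A2 by (simp add: smooth2_def)
    show "\<forall>a b. a *\<^sub>R pd 1 (F \<circ> c) x + b *\<^sub>R pd 2 (F \<circ> c) x = 0 \<longrightarrow> a = 0 \<and> b = 0" using A3 by blast
    show "norm ((N \<circ> c) x) = 1" "(N \<circ> c) x \<bullet> pd 1 (F \<circ> c) x = 0" "(N \<circ> c) x \<bullet> pd 2 (F \<circ> c) x = 0"
      using A3 by auto
    show "mean_curv_vec (F \<circ> c) (N \<circ> c) x = (deriv \<phi> (e3comp ((F \<circ> c) x)) * e3comp ((N \<circ> c) x)) *\<^sub>R (N \<circ> c) x"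
      using A4 by simp
    show "\<phi> differentiable (at (e3comp ((F \<circ> c) x)))" by (rule A5)
  qed
qed

lemma mu_sq:
  fixes v :: "real \<times> real \<times> real"
  shows "e3comp v * e3comp v \<le> v \<bullet> v"
proof -
  obtain a b d where v: "v = (a, b, d)" by (metis prod.collapse)
  show ?thesis unfolding v by (simp add: e3comp_def inner_Pair)
qed

lemma phi_bound:
  fixes C d g :: real
  assumes C: "C > 0" and dd: "\<bar>d\<bar> \<le> C * (1 + \<bar>m\<bar>)" and mg: "m * m \<le> g"
  shows "4 + 2 * d * m \<le> (4 + 4 * C) * (1 + g)"
proof -
  have g0: "g \<ge> 0" using mg by (metis dual_order.trans zero_le_square)
  have am: "\<bar>m\<bar> \<le> 1 + g"
  proof -
    have s0: "0 \<le> (\<bar>m\<bar> - 1) * (\<bar>m\<bar> - 1)" by simp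
    have s1: "\<bar>m\<bar> * \<bar>m\<bar> = m * m" by (simp add: abs_mult_self_eq)
    have "\<bar>m\<bar> \<le> 1 + m * m" using s0 s1 by (simp add: algebra_simps)
    then show ?thesis using mg by linarith
  qed
  have "d * m \<le> \<bar>d\<bar> * \<bar>m\<bar>" by (metis abs_ge_self abs_mult)
  also have "\<dots> \<le> C * (1 + \<bar>m\<bar>) * \<bar>m\<bar>" using dd by (simp add: mult_right_mono)
  also have "\<dots> = C * \<bar>m\<bar> + C * (m * m)" by (simp add: algebra_simps abs_mult_self_eq)
  also have "\<dots> \<le> C * (1 + g) + C * g"
    using am mg C by (intro add_mono mult_left_mono) auto
  finally have "d * m \<le> C * (1 + g) + C * g" .
  then show ?thesis using C g0 by (simp add: algebra_simps)
qed



lemma delta_facts: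
  fixes K :: real and n :: nat
  assumes K: "K > 0" and n: "n \<ge> 1"
  defines "\<delta> \<equiv> 1 / (real n * (3 * K + 3))"
  shows "\<delta> > 0" "2 * \<delta> \<le> 1 / real n" "K * (3 * \<delta>) < 1 / real n" "sqrt (8 * \<delta> * \<delta>) < 1 / real n"
proof -
  have rn: "real n \<ge> 1" using n by simp
  have t: "\<delta> * real n * (3 * K + 3) = 1" using rn K by (simp add: \<delta>_def)
  have tp: "\<delta> * real n > 0" using rn K by (simp add: \<delta>_def)
  show "\<delta> > 0" using rn K by (simp add: \<delta>_def)
  define s where "s = \<delta> * real n"
  have ts: "s * (3 * K + 3) = 1" using t by (simp add: s_def)
  have sp: "s > 0" using tp by (simp add: s_def)
  have "s * 2 \<le> s * (3 * K + 3)" by (rule mult_left_mono) (use sp K in auto)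
  then have a: "2 * (\<delta> * real n) \<le> 1" using ts by (simp add: s_def)
  then show "2 * \<delta> \<le> 1 / real n" using rn by (simp add: field_simps)
  have "K * (3 * s) < 1" using ts sp by (simp add: algebra_simps)
  then have "K * (3 * (\<delta> * real n)) < 1" by (simp add: s_def)
  then show "K * (3 * \<delta>) < 1 / real n" using rn by (simp add: field_simps)
  have "s * 3 \<le> s * (3 * K + 3)" by (rule mult_left_mono) (use sp K in auto)
  then have b: "s \<le> 1 / 3" using ts by simp
  have "s * s \<le> s * (1 / 3)" by (rule mult_left_mono) (use sp b in auto)
  then have "8 * s * s < 1" using b by simp
  then have "8 * (\<delta> * real n) * (\<delta> * real n) < 1" by (simp add: s_def)
  then have "8 * \<delta> * \<delta> < (1 / real n) * (1 / real n)" using rn by (simp add: field_simps)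
  then have "sqrt (8 * \<delta> * \<delta>) < sqrt ((1 / real n) * (1 / real n))" by (rule real_sqrt_less_mono)
  also have "\<dots> = 1 / real n" by (subst real_sqrt_abs2) simp
  finally show "sqrt (8 * \<delta> * \<delta>) < 1 / real n" .
qed



lemma key:
  fixes A :: "((real \<times> real) set \<times> (real \<times> real \<Rightarrow> 'm::{t2_space, second_countable_topology})) set"
    and F N :: "'m \<Rightarrow> real \<times> real \<times> real" and \<phi> :: "real \<Rightarrow> real" and u :: "'m \<Rightarrow> real"
  assumes sp: "smooth_real \<phi>" and C: "C > 0" and Cb: "\<And>t. \<bar>deriv \<phi> t\<bar> \<le> C * (1 + \<bar>t\<bar>)"
    and imm: "immersed_surface A F N" and prp: "proper_immersion F" and pm: "phi_minimal A F N \<phi>"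
    and u2: "C2_on_surface A u" and bdd: "bdd_above (range u)" and n: "n \<ge> 1"
  shows "\<exists>p. u p > Sup (range u) - 1 / real n \<and>
     (\<exists>(U, c)\<in>A. \<exists>x\<in>U. c x = p \<and> sqrt (grad_inner (F \<circ> c) (u \<circ> c) (u \<circ> c) x) < 1 / real n
        \<and> phi_lap \<phi> (F \<circ> c) (u \<circ> c) x < 1 / real n)"
proof -
  define M where "M = Sup (range u)"
  have uM: "u y \<le> M" for y unfolding M_def by (rule cSup_upper[OF rangeI bdd])
  have cover: "(\<Union>(U, c)\<in>A. c ` U) = UNIV" using imm unfolding immersed_surface_def by blast
  have chA: "open (c ` U) \<and> (\<exists>c'. homeomorphism U (c ` U) c c') \<and> open U \<and> smooth2 U (F \<circ> c)"
    if "(U, c) \<in> A" for U c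
    using imm that unfolding immersed_surface_def by fastforce
  have uCk: "Ck 2 U (u \<circ> c)" if "(U, c) \<in> A" for U c
    using u2 that unfolding C2_on_surface_def by fastforce
  have Fcont: "continuous_on UNIV F"
  proof (rule cont_from_charts[OF cover])
    fix U c assume "(U, c) \<in> A"
    with chA[OF this] show "open (c ` U) \<and> (\<exists>c'. homeomorphism U (c ` U) c c') \<and> continuous_on U (F \<circ> c)"
      using Ck_cont[of 0 U "F \<circ> c"] by (auto simp: smooth2_def)
  qed
  have ucont: "continuous_on UNIV u"
  proof (rule cont_from_charts[OF cover])
    fix U c assume "(U, c) \<in> A"
    with chA[OF this] show "open (c ` U) \<and> (\<exists>c'. homeomorphism U (c ` U) c c') \<and> continuous_on U (u \<circ> c)"
      using Ck_cont[OF uCk] by auto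
  qed
  define K where "K = 4 + 4 * C"
  have K: "K > 0" using C by (simp add: K_def)
  define \<delta> where "\<delta> = 1 / (real n * (3 * K + 3))"
  note DF = delta_facts[OF K n, folded \<delta>_def]
  have "M - \<delta> < M" using DF(1) by simp
  then obtain q where q: "u q > M - \<delta>"
    unfolding M_def using less_cSup_iff[of "range u", OF _ bdd] by auto
  define gq where "gq = F q \<bullet> F q"
  have gq0: "gq \<ge> 0" by (simp add: gq_def)
  define \<epsilon> where "\<epsilon> = \<delta> / (1 + gq)"
  have eps: "\<epsilon> > 0" using DF(1) gq0 by (simp add: \<epsilon>_def)
  have epsd: "\<epsilon> \<le> \<delta>" using DF(1) gq0 by (simp add: \<epsilon>_def field_simps)
  have epsg: "\<epsilon> * gq < \<delta>" using DF(1) gq0 by (simp add: \<epsilon>_def field_simps)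
  define f where "f p = u p - \<epsilon> * (F p \<bullet> F p)" for p
  have fcont: "continuous_on UNIV f"
    unfolding f_def[abs_def] by (intro continuous_intros ucont Fcont)
  define S where "S = {p. f q \<le> f p}"
  have clS: "closed S" unfolding S_def by (rule closed_Collect_le[OF continuous_on_const fcont])
  have "\<epsilon> * (F q \<bullet> F q) \<ge> 0" by (intro mult_nonneg_nonneg) (use eps in auto)
  then have fqM: "f q \<le> M" using uM[of q] by (simp add: f_def)
  define R where "R = sqrt ((M - f q) / \<epsilon>)"
  have SR: "S \<subseteq> F -` cball 0 R"
  proof
    fix p assume "p \<in> S"
    then have "f q \<le> f p" by (simp add: S_def)
    then have "\<epsilon> * (F p \<bullet> F p) \<le> M - f q" using uM[of p] by (simp add: f_def)
    then have "F p \<bullet> F p \<le> (M - f q) / \<epsilon>" using eps by (simp add: field_simps)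
    then have "sqrt (F p \<bullet> F p) \<le> R" unfolding R_def by (rule real_sqrt_le_mono)
    then show "p \<in> F -` cball 0 R" by (simp add: norm_eq_sqrt_inner)
  qed
  have "compact (F -` cball 0 R)" using prp unfolding proper_immersion_def by simp
  then have cS: "compact S" using SR compact_Int_closed[OF _ clS] by (metis inf.absorb2)
  have "q \<in> S" by (simp add: S_def)
  then obtain p where pS: "p \<in> S" and pmS: "\<And>y. y \<in> S \<Longrightarrow> f y \<le> f p"
    using continuous_attains_sup[OF cS _ continuous_on_subset[OF fcont]] by blast
  have pmax: "f y \<le> f p" for y
  proof (cases "y \<in> S")
    case True then show ?thesis by (rule pmS)
  next
    case False then have "f y < f q" by (simp add: S_def)
    also have "f q \<le> f p" using pS by (simp add: S_def)
    finally show ?thesis by simp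
  qed
  have "p \<in> (\<Union>(U, c)\<in>A. c ` U)" using cover by simp
  then obtain U c x where Uc: "(U, c) \<in> A" and x: "x \<in> U" and cx: "c x = p" by blast
  interpret G: chartgeo "F \<circ> c" U x "N \<circ> c" \<phi>
    by (rule chart_ok[OF imm pm sp Uc x])
  have gam: "G.gam y = F (c y) \<bullet> F (c y)" for y by (simp add: G.gam_def)
  define gp where "gp = F p \<bullet> F p"
  have gp0: "gp \<ge> 0" by (simp add: gp_def)
  have mx: "(u \<circ> c) y - \<epsilon> * G.gam y \<le> (u \<circ> c) x - \<epsilon> * G.gam x" if "y \<in> U" for y
    using pmax[of "c y"] unfolding gam f_def by (simp add: cx)
  note CMP = G.compare[OF uCk[OF Uc] eps mx]
  have fpq: "f q \<le> f p" using pS by (simp add: S_def)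
  have egp: "\<epsilon> * gp < 2 * \<delta>"
  proof -
    have "\<epsilon> * gp \<le> u p - u q + \<epsilon> * gq" using fpq by (simp add: f_def gp_def gq_def)
    then show ?thesis using uM[of p] q epsg by linarith
  qed
  have up: "u p > M - 1 / real n"
  proof -
    have "u p \<ge> f p" using eps gp0 by (simp add: f_def gp_def[symmetric])
    moreover have "f q > M - 2 * \<delta>" using q epsg by (simp add: f_def gq_def[symmetric])
    ultimately show ?thesis using fpq DF(2) by linarith
  qed
  have gxp: "G.gam x = gp" by (simp add: gam cx gp_def)
  have lapg: "phi_lap \<phi> (F \<circ> c) G.gam x \<le> K * (1 + gp)"
  proof -
    have "phi_lap \<phi> (F \<circ> c) G.gam x = 4 + 2 * deriv \<phi> (e3comp ((F \<circ> c) x)) * e3comp ((F \<circ> c) x)"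
      by (rule G.phi_lap_gam)
    also have "\<dots> \<le> (4 + 4 * C) * (1 + gp)"
      by (rule phi_bound[OF C Cb]) (simp add: gp_def cx[symmetric] mu_sq)
    finally show ?thesis by (simp add: K_def)
  qed
  have lap_ok: "phi_lap \<phi> (F \<circ> c) (u \<circ> c) x < 1 / real n"
  proof -
    have "phi_lap \<phi> (F \<circ> c) (u \<circ> c) x \<le> \<epsilon> * phi_lap \<phi> (F \<circ> c) G.gam x" by (rule CMP(1))
    also have "\<dots> \<le> \<epsilon> * (K * (1 + gp))" using lapg eps by (simp add: mult_left_mono)
    also have "\<dots> = K * (\<epsilon> + \<epsilon> * gp)" by (simp add: algebra_simps)
    also have "\<dots> < K * (3 * \<delta>)" using K epsd egp by simp
    also have "\<dots> < 1 / real n" by (rule DF(3))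
    finally show ?thesis .
  qed
  have grad_ok: "sqrt (grad_inner (F \<circ> c) (u \<circ> c) (u \<circ> c) x) < 1 / real n"
  proof -
    have "grad_inner (F \<circ> c) (u \<circ> c) (u \<circ> c) x = \<epsilon>^2 * grad_inner (F \<circ> c) G.gam G.gam x" by (rule CMP(2))
    also have "\<dots> \<le> \<epsilon>^2 * (4 * gp)" using G.grad_gam gxp by (simp add: mult_left_mono)
    also have "\<dots> = 4 * \<epsilon> * (\<epsilon> * gp)" by (simp add: power2_eq_square)
    also have "\<dots> \<le> 4 * \<delta> * (\<epsilon> * gp)" using epsd eps gp0 by (intro mult_right_mono) auto
    also have "\<dots> < 4 * \<delta> * (2 * \<delta>)" using egp DF(1) by simp
    finally have "grad_inner (F \<circ> c) (u \<circ> c) (u \<circ> c) x < 8 * \<delta> * \<delta>" by simp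
    then have "sqrt (grad_inner (F \<circ> c) (u \<circ> c) (u \<circ> c) x) < sqrt (8 * \<delta> * \<delta>)" by (rule real_sqrt_less_mono)
    also have "\<dots> < 1 / real n" by (rule DF(4))
    finally show ?thesis .
  qed
  show ?thesis
    using up lap_ok grad_ok Uc x cx unfolding M_def by blast
qed

theorem corollary2p8:
  fixes A :: "((real \<times> real) set \<times> (real \<times> real \<Rightarrow> 'm::{t2_space, second_countable_topology})) set"
    and F N :: "'m \<Rightarrow> real \<times> real \<times> real"
    and \<phi> :: "real \<Rightarrow> real"
  assumes "smooth_real \<phi>"
    and "\<exists>C>0. \<forall>t. \<bar>deriv \<phi> t\<bar> \<le> C * (1 + \<bar>t\<bar>)"
    and "immersed_surface A F N"
    and "proper_immersion F"
    and "phi_minimal A F N \<phi>"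
  shows "omori_yau A F \<phi> \<and> phi_stoch_complete A F \<phi>"
proof -
  obtain C where C: "C > 0" and Cb: "\<And>t. \<bar>deriv \<phi> t\<bar> \<le> C * (1 + \<bar>t\<bar>)" using assms(2) by blast
  note K = key[OF assms(1) C Cb assms(3) assms(4) assms(5)]
  have oy: "omori_yau A F \<phi>"
    unfolding omori_yau_def
  proof (intro allI impI)
    fix u :: "'m \<Rightarrow> real"
    assume u2: "C2_on_surface A u" and bdd: "bdd_above (range u)"
    have "\<forall>n. \<exists>p. n \<ge> 1 \<longrightarrow> u p > Sup (range u) - 1 / real n \<and>
     (\<exists>(U, c)\<in>A. \<exists>x\<in>U. c x = p \<and> sqrt (grad_inner (F \<circ> c) (u \<circ> c) (u \<circ> c) x) < 1 / real n
        \<and> phi_lap \<phi> (F \<circ> c) (u \<circ> c) x < 1 / real n)"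
      using K[OF u2 bdd] by blast
    then show "\<exists>p :: nat \<Rightarrow> 'm. \<forall>n::nat. n \<ge> 1 \<longrightarrow>
          u (p n) > Sup (range u) - 1 / real n
        \<and> (\<exists>(U, c)\<in>A. \<exists>x\<in>U. c x = p n
             \<and> sqrt (grad_inner (F \<circ> c) (u \<circ> c) (u \<circ> c) x) < 1 / real n
             \<and> phi_lap \<phi> (F \<circ> c) (u \<circ> c) x < 1 / real n)"
      by (rule choice)
  qed
  have sc: "phi_stoch_complete A F \<phi>"
    unfolding phi_stoch_complete_def
  proof (intro allI impI)
    fix u :: "'m \<Rightarrow> real"
    assume u2: "C2_on_surface A u" and bdd: "bdd_above (range u)"
    have "\<forall>n. \<exists>p. n \<ge> 1 \<longrightarrow> u p > Sup (range u) - 1 / real n \<and>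
     (\<exists>(U, c)\<in>A. \<exists>x\<in>U. c x = p \<and> phi_lap \<phi> (F \<circ> c) (u \<circ> c) x < 1 / real n)"
      using K[OF u2 bdd] by fastforce
    then show "\<exists>p :: nat \<Rightarrow> 'm. \<forall>n::nat. n \<ge> 1 \<longrightarrow>
          u (p n) > Sup (range u) - 1 / real n
        \<and> (\<exists>(U, c)\<in>A. \<exists>x\<in>U. c x = p n
             \<and> phi_lap \<phi> (F \<circ> c) (u \<circ> c) x < 1 / real n)"
      by (rule choice)
  qed
  show ?thesis using oy sc by blast
qed


end
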